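(* Let $G=Z_{2^{\lambda_1}}\times\cdots\times Z_{2^{\lambda_n}}$ with $\lambda_1\le\cdots\le\lambda_n$, and let $\mathbf m$ be a canonical tuple of $G$. Then the characteristic subgroups of $G$ below $\mathbf m$ are in one-to-one correspondence with the projection-surjective subgroups of $Z_2^r$, where $r$ is the number of nondegenerate coordinates of $\mathbf m$.
   Context: Set $\lambda_0=0$ and, for any tuple, $a_0=0$. Tuples are ordered componentwise; $\Lambda(G)=\{\mathbf a\in\mathbb Z^n:\mathbf 0\le\mathbf a\le(\lambda_1,\dots,\lambda_n)\}$. For $\mathbf a\in\Lambda(G)$, $T(\mathbf a)$ is the set of $(g_1,\dots,g_n)\in G$ with $|g_i|=2^{a_i}$ for all $i$. A tuple $\mathbf a\in\Lambda(G)$ is canonical if (I) $a_i\ge a_{i-1}$ for $i\in\{2,\dots,n\}$ and (II) $a_{i+1}-a_i\le\lambda_{i+1}-\lambda_i$ for $i\in\{1,\dots,n-1\}$. A canonical tuple $\mathbf a$ is degenerate at coordinate $i\in\{1,\dots,n\}$ if $a_i=a_{i-1}$, or ($i\le n-1$ and) $a_{i+1}-a_i=\lambda_{i+1}-\lambda_i$; otherwise $i$ is a nondegenerate coordinate. For a characteristic subgroup $H$ of $G$, define $\mathbf m$ by $m_i=\max\{a_i:\mathbf a\in\Lambda(G),\ T(\mathbf a)\subseteq H\}$; $H$ is then called a characteristic subgroup below $\mathbf m$. A subgroup $K$ of a direct product $K_1\times\cdots\times K_l$ is projection-surjective if its projection onto each factor $K_i$ is all of $K_i$. *)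

theory Defs
  imports "HOL-Algebra.Algebra"
begin

definition Gp :: "nat \<Rightarrow> (nat \<Rightarrow> nat) \<Rightarrow> (nat \<Rightarrow> int) monoid" where
  "Gp n lam = product_group {1..n} (\<lambda>i. integer_mod_group (2 ^ lam i))"

definition characteristic :: "'a set \<Rightarrow> ('a, 'b) monoid_scheme \<Rightarrow> bool" where
  "characteristic H G \<longleftrightarrow> subgroup H G \<and> (\<forall>\<phi>\<in>iso G G. \<phi> ` H = H)"

definition LambdaG :: "nat \<Rightarrow> (nat \<Rightarrow> nat) \<Rightarrow> (nat \<Rightarrow> nat) set" where
  "LambdaG n lam = {a. (\<forall>i\<in>{1..n}. a i \<le> lam i) \<and> (\<forall>i. i \<notin> {1..n} \<longrightarrow> a i = 0)}"

definition Tset :: "nat \<Rightarrow> (nat \<Rightarrow> nat) \<Rightarrow> (nat \<Rightarrow> nat) \<Rightarrow> (nat \<Rightarrow> int) set" where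
  "Tset n lam a = {g \<in> carrier (Gp n lam).
      \<forall>i\<in>{1..n}. group.ord (integer_mod_group (2 ^ lam i)) (g i) = 2 ^ a i}"

text \<open>Convention a_0 = 0.\<close>
definition prev :: "(nat \<Rightarrow> nat) \<Rightarrow> nat \<Rightarrow> nat" where
  "prev a i = (if i = 1 then 0 else a (i - 1))"

definition canonical :: "nat \<Rightarrow> (nat \<Rightarrow> nat) \<Rightarrow> (nat \<Rightarrow> nat) \<Rightarrow> bool" where
  "canonical n lam a \<longleftrightarrow> a \<in> LambdaG n lam
     \<and> (\<forall>i\<in>{2..n}. a i \<ge> a (i - 1))
     \<and> (\<forall>i\<in>{1..n-1}. int (a (i + 1)) - int (a i) \<le> int (lam (i + 1)) - int (lam i))"

definition degenerate_at :: "nat \<Rightarrow> (nat \<Rightarrow> nat) \<Rightarrow> (nat \<Rightarrow> nat) \<Rightarrow> nat \<Rightarrow> bool" where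
  "degenerate_at n lam a i \<longleftrightarrow> a i = prev a i
     \<or> (i \<le> n - 1 \<and> int (a (i + 1)) - int (a i) = int (lam (i + 1)) - int (lam i))"

definition nondeg_count :: "nat \<Rightarrow> (nat \<Rightarrow> nat) \<Rightarrow> (nat \<Rightarrow> nat) \<Rightarrow> nat" where
  "nondeg_count n lam a = card {i \<in> {1..n}. \<not> degenerate_at n lam a i}"

definition char_below :: "nat \<Rightarrow> (nat \<Rightarrow> nat) \<Rightarrow> (nat \<Rightarrow> nat) \<Rightarrow> (nat \<Rightarrow> int) set \<Rightarrow> bool" where
  "char_below n lam m H \<longleftrightarrow> characteristic H (Gp n lam)
     \<and> (\<forall>i\<in>{1..n}. m i = Max {a i | a. a \<in> LambdaG n lam \<and> Tset n lam a \<subseteq> H})"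

definition Z2pow :: "nat \<Rightarrow> (nat \<Rightarrow> int) monoid" where
  "Z2pow r = product_group {1..r} (\<lambda>_. integer_mod_group 2)"

definition proj_surjective :: "nat \<Rightarrow> (nat \<Rightarrow> int) set \<Rightarrow> bool" where
  "proj_surjective r K \<longleftrightarrow> subgroup K (Z2pow r)
     \<and> (\<forall>i\<in>{1..r}. (\<lambda>k. k i) ` K = carrier (integer_mod_group 2))"

end

theory Submission
  imports Defs
begin


definition ex :: "nat \<Rightarrow> int \<Rightarrow> nat" where
  "ex l x = (LEAST a. (2::int)^l dvd 2^a * x)"

lemma p2_dvd_iff: "((2::int)^a dvd 2^b) \<longleftrightarrow> a \<le> b"
proof
  assume h: "(2::int)^a dvd 2^b"
  show "a \<le> b"
  proof (rule ccontr)
    assume "\<not> a \<le> b"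
    then have "(2::int)^b < 2^a" by simp
    moreover have "(2::int)^a \<le> 2^b" using h by (simp add: zdvd_imp_le)
    ultimately show False by simp
  qed
next
  assume "a \<le> b" thus "(2::int)^a dvd 2^b" by (simp add: le_imp_power_dvd)
qed

lemma p2_dvd_iff_nat: "((2::nat)^a dvd 2^b) \<longleftrightarrow> a \<le> b"
proof
  assume h: "(2::nat)^a dvd 2^b"
  show "a \<le> b"
  proof (rule ccontr)
    assume "\<not> a \<le> b"
    then have "(2::nat)^b < 2^a" by simp
    moreover have "(2::nat)^a \<le> 2^b" using h by (simp add: dvd_imp_le)
    ultimately show False by simp
  qed
next
  assume "a \<le> b" thus "(2::nat)^a dvd 2^b" by (simp add: le_imp_power_dvd)
qed

lemma od_mono: "(2::int)^l dvd 2^a * x \<Longrightarrow> a \<le> b \<Longrightarrow> (2::int)^l dvd 2^b * x"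
proof -
  assume h: "(2::int)^l dvd 2^a * x" "a \<le> b"
  have "(2::int)^b * x = 2^(b-a) * (2^a * x)"
    using h(2) by (simp add: mult.assoc flip: power_add)
  thus ?thesis using h(1) by (metis dvd_mult)
qed

lemma ex_le_iff: "ex l x \<le> b \<longleftrightarrow> (2::int)^l dvd 2^b * x"
proof
  have P: "(2::int)^l dvd 2^(ex l x) * x" unfolding ex_def by (rule LeastI[where k=l]) simp
  assume "ex l x \<le> b" thus "(2::int)^l dvd 2^b * x" using P od_mono by blast
next
  assume "(2::int)^l dvd 2^b * x" thus "ex l x \<le> b" unfolding ex_def by (rule Least_le)
qed

lemma ex_le: "ex l x \<le> l"
  by (simp add: ex_le_iff)

lemma ex_eqI: "(\<And>b. (2::int)^l dvd 2^b * x \<longleftrightarrow> (2::int)^l dvd 2^b * y) \<Longrightarrow> ex l x = ex l y"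
  by (metis ex_le_iff le_antisym order_refl)

lemma ex_mod: "ex l (x mod 2^l) = ex l x"
proof (rule ex_eqI)
  fix b
  have "2^b * (x mod 2^l) mod 2^l = 2^b * x mod (2::int)^l"
    by (simp add: mod_mult_right_eq)
  thus "(2::int)^l dvd 2^b * (x mod 2^l) \<longleftrightarrow> 2^l dvd 2^b * x"
    by (metis dvd_eq_mod_eq_0)
qed

lemma ex_neg: "ex l (- x) = ex l x"
  by (rule ex_eqI) simp

lemma ex_le_iff2: "b \<le> l \<Longrightarrow> ex l x \<le> b \<longleftrightarrow> (2::int)^(l-b) dvd x"
proof -
  assume "b \<le> l"
  hence "(2::int)^l = 2^b * 2^(l-b)" by (simp flip: power_add)
  thus ?thesis by (simp add: ex_le_iff)
qed

lemma ex_0[simp]: "ex l 0 = 0"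
  using ex_le_iff[of l 0 0] by simp

lemma ex_0_iff: "0 \<le> x \<Longrightarrow> x < 2^l \<Longrightarrow> ex l x = 0 \<longleftrightarrow> x = 0"
proof
  assume "0 \<le> x" "x < 2^l" "ex l x = 0"
  hence "(2::int)^l dvd x" using ex_le_iff2[of 0 l x] by simp
  thus "x = 0" using \<open>0 \<le> x\<close> \<open>x < 2^l\<close> using zdvd_not_zless[of x "2^l"] by force
qed simp

lemma ord_eq:
  assumes "0 \<le> x" "x < 2^l"
  shows "group.ord (integer_mod_group (2^l)) x = 2^(ex l x)"
proof -
  interpret Z: group "integer_mod_group (2^l)" by simp
  have xc: "x \<in> carrier (integer_mod_group (2^l))"
    using assms by (simp add: carrier_integer_mod_group)
  let ?o = "Z.ord x"
  have key: "\<And>N. ?o dvd N \<longleftrightarrow> (2::int)^l dvd int N * x"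
    using Z.pow_eq_id[OF xc] by (simp add: dvd_eq_mod_eq_0)
  have "?o dvd 2^l" using key[of "2^l"] by simp
  then obtain k where k: "k \<le> l" "?o = 2^k"
    using divides_primepow_nat[of 2] by auto
  have "\<And>b. ex l x \<le> b \<longleftrightarrow> k \<le> b"
  proof -
    fix b
    have "ex l x \<le> b \<longleftrightarrow> (2::int)^l dvd int (2^b) * x" by (simp add: ex_le_iff)
    also have "\<dots> \<longleftrightarrow> ?o dvd 2^b" using key by simp
    also have "\<dots> \<longleftrightarrow> k \<le> b" using k(2) p2_dvd_iff_nat by simp
    finally show "ex l x \<le> b \<longleftrightarrow> k \<le> b" .
  qed
  hence "ex l x = k" by (metis le_antisym order_refl)
  thus ?thesis using k by simp
qed



lemma odd_inv: "odd (u::int) \<Longrightarrow> \<exists>v. odd v \<and> (u * v) mod 2^l = 1 mod 2^l"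
proof -
  assume u: "odd u"
  have "coprime u ((2::int)^(Suc l))" using u by simp
  hence g: "gcd u ((2::int)^(Suc l)) = 1" by simp
  obtain v w where vw: "v * u + w * (2::int)^(Suc l) = 1" using bezout_int[of u "2^Suc l"] g by auto
  have "u * v = 1 - (2 * w) * 2^l" using vw by (simp add: algebra_simps)
  hence e1: "u * v = 1 + (- (2 * w)) * 2^l" by simp
  have "odd (u * v)" unfolding e1 by simp
  hence "odd v" by simp
  moreover have "(u * v) mod 2^l = 1 mod 2^l" unfolding e1 by (rule mod_mult_self1)
  ultimately show ?thesis by blast
qed

lemma ex_lt_iff: "1 \<le> mm \<Longrightarrow> mm \<le> l \<Longrightarrow> ex l z < mm \<longleftrightarrow> (2::int)^(l-mm+1) dvd z"
proof -
  assume a: "1 \<le> mm" "mm \<le> l"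
  have "ex l z < mm \<longleftrightarrow> ex l z \<le> mm - 1" using a by auto
  also have "\<dots> \<longleftrightarrow> (2::int)^(l-(mm-1)) dvd z" using a by (intro ex_le_iff2) simp
  also have "l - (mm - 1) = l - mm + 1" using a by simp
  finally show ?thesis .
qed

lemma decomp_pos:
  assumes "0 < ex l x"
  shows "\<exists>a. x = 2^(l - ex l x) * a \<and> odd a"
proof -
  define e where "e = ex l x"
  have le: "e \<le> l" unfolding e_def by (rule ex_le)
  have "(2::int)^(l - e) dvd x" using ex_le_iff2[OF le, of x] unfolding e_def by simp
  then obtain a where a: "x = 2^(l - e) * a" by blast
  have "\<not> e < e" by simp
  hence nd: "\<not> (2::int)^(l-e+1) dvd x" using ex_lt_iff[of e l x] assms le unfolding e_def by simp
  have "odd a"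
  proof
    assume "even a"
    then obtain c where "a = 2 * c" by blast
    hence "x = (2^(l-e+1)) * c" using a by simp
    thus False using nd by simp
  qed
  thus ?thesis using a unfolding e_def by blast
qed

lemma trans_unit:
  assumes "ex l x = ex l y"
  shows "\<exists>u. odd u \<and> (u * x) mod 2^l = y mod 2^l"
proof (cases "ex l x = 0")
  case True
  hence "(2::int)^l dvd x" "(2::int)^l dvd y" using ex_le_iff[of l x 0] ex_le_iff[of l y 0] assms by auto
  hence "(1 * x) mod 2^l = y mod 2^l" by simp
  thus ?thesis by (intro exI[of _ 1]) simp
next
  case False
  define s where "s = l - ex l x"
  obtain a where a: "x = 2^s * a" "odd a" using decomp_pos[of l x] False unfolding s_def by auto
  obtain b where b: "y = 2^s * b" "odd b" using decomp_pos[of l y] False assms unfolding s_def by auto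
  obtain v where v: "odd v" "(a * v) mod 2^l = 1 mod 2^l" using odd_inv[OF a(2)] by blast
  have "(b * v * x) mod 2^l = (2^s * b * (a * v)) mod 2^l" unfolding a(1) by (simp add: algebra_simps)
  also have "\<dots> = (2^s * b * ((a * v) mod 2^l)) mod 2^l" by (simp add: mod_mult_right_eq)
  also have "\<dots> = (2^s * b * (1 mod 2^l)) mod 2^l" using v by simp
  also have "\<dots> = y mod 2^l" using b by (simp add: mod_mult_right_eq)
  finally show ?thesis using b(2) v(1) by (intro exI[of _ "b * v"]) simp
qed

lemma cyc:
  assumes "ex l c \<le> ex l y"
  shows "\<exists>t::nat. (int t * y) mod 2^l = c mod 2^l"
proof (cases "ex l y = 0")
  case True
  hence "(2::int)^l dvd c" using ex_le_iff[of l c 0] assms by auto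
  thus ?thesis by (intro exI[of _ 0]) simp
next
  case False
  let ?s = "l - ex l y"
  obtain b where b: "y = 2^?s * b" "odd b" using decomp_pos[of l y] False by auto
  have "(2::int)^?s dvd c" using ex_le_iff2[of "ex l y" l c] assms ex_le by simp
  then obtain a where a: "c = 2^?s * a" by blast
  obtain v where v: "odd v" "(b * v) mod 2^l = 1 mod 2^l" using odd_inv[OF b(2)] by blast
  define t where "t = nat ((a * v) mod 2^l)"
  have t: "int t = (a * v) mod 2^l" unfolding t_def by simp
  have "(int t * y) mod 2^l = (((a * v) mod 2^l) * (2^?s * b)) mod 2^l" using t b by simp
  also have "\<dots> = ((a * v) * (2^?s * b)) mod 2^l" by (simp add: mod_mult_left_eq)
  also have "\<dots> = (2^?s * a * (b * v)) mod 2^l" by (simp add: algebra_simps)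
  also have "\<dots> = (2^?s * a * ((b * v) mod 2^l)) mod 2^l" by (simp add: mod_mult_right_eq)
  also have "\<dots> = (2^?s * a * (1 mod 2^l)) mod 2^l" using v by simp
  also have "\<dots> = c mod 2^l" using a by (simp add: mod_mult_right_eq)
  finally show ?thesis by blast
qed

lemma unit_cancel:
  assumes "odd (u::int)" "(u * x) mod 2^l = (u * y) mod 2^l"
  shows "x mod 2^l = y mod 2^l"
proof -
  obtain v where v: "odd v" "(u * v) mod 2^l = 1 mod 2^l" using odd_inv[OF assms(1)] by blast
  have "x mod 2^l = (x * ((u * v) mod 2^l)) mod 2^l" using v by (simp add: mod_mult_right_eq)
  also have "\<dots> = (v * (u * x)) mod 2^l" by (simp add: mod_mult_right_eq algebra_simps)
  also have "\<dots> = (v * ((u * x) mod 2^l)) mod 2^l" by (simp add: mod_mult_right_eq)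
  also have "\<dots> = (v * ((u * y) mod 2^l)) mod 2^l" using assms(2) by simp
  also have "\<dots> = (y * ((u * v) mod 2^l)) mod 2^l" by (simp add: mod_mult_right_eq algebra_simps)
  also have "\<dots> = y mod 2^l" using v by (simp add: mod_mult_right_eq)
  finally show ?thesis .
qed

definition bitv :: "nat \<Rightarrow> nat \<Rightarrow> int \<Rightarrow> int" where
  "bitv l mm x = (if ex l x < mm then 0 else 1)"

lemma bitv_add:
  assumes "1 \<le> mm" "mm \<le> l" "ex l x \<le> mm" "ex l y \<le> mm"
  shows "bitv l mm ((x + y) mod 2^l) = (bitv l mm x + bitv l mm y) mod 2"
proof -
  let ?k = "l - mm"
  have "(2::int)^?k dvd x" "(2::int)^?k dvd y" using assms ex_le_iff2 by auto
  then obtain a b where ab: "x = 2^?k * a" "y = 2^?k * b" by blast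
  have D: "\<And>z. (2::int)^(?k+1) dvd 2^?k * z \<longleftrightarrow> even z"
    by (simp add: power_add mult_dvd_mono)
  have bx: "bitv l mm x = (if even a then 0 else 1)"
    unfolding bitv_def using ex_lt_iff[OF assms(1,2), of x] ab D by simp
  have by': "bitv l mm y = (if even b then 0 else 1)"
    unfolding bitv_def using ex_lt_iff[OF assms(1,2), of y] ab D by simp
  have "x + y = 2^?k * (a + b)" using ab by (simp add: algebra_simps)
  hence bxy: "bitv l mm ((x + y) mod 2^l) = (if even (a+b) then 0 else 1)"
    unfolding bitv_def ex_mod using ex_lt_iff[OF assms(1,2), of "x+y"] D by simp
  show ?thesis unfolding bx by' bxy by auto
qed

lemma ex_pow: "a \<le> l \<Longrightarrow> ex l (2^(l-a)) = a"
proof -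
  assume a: "a \<le> l"
  have "\<And>b. ex l (2^(l-a)) \<le> b \<longleftrightarrow> a \<le> b"
  proof -
    fix b
    have "ex l (2^(l-a)) \<le> b \<longleftrightarrow> l \<le> b + (l - a)" unfolding ex_le_iff by (simp add: p2_dvd_iff flip: power_add)
    thus "ex l (2^(l-a)) \<le> b \<longleftrightarrow> a \<le> b" using a by arith
  qed
  thus ?thesis by (metis le_antisym order_refl)
qed

lemma ex_m2: "ex l (-2 * x) = ex l x - 1"
proof -
  have "\<And>b. ex l (-2 * x) \<le> b \<longleftrightarrow> ex l x - 1 \<le> b"
  proof -
    fix b
    have "ex l (-2 * x) \<le> b \<longleftrightarrow> (2::int)^l dvd 2^(Suc b) * x"
      unfolding ex_le_iff by (simp add: algebra_simps)
    also have "\<dots> \<longleftrightarrow> ex l x - 1 \<le> b" unfolding ex_le_iff[symmetric] by arith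
    finally show "ex l (-2 * x) \<le> b \<longleftrightarrow> ex l x - 1 \<le> b" .
  qed
  thus ?thesis by (metis le_antisym order_refl)
qed

lemma ex_down:
  assumes "l \<le> l'"
  shows "ex l h = ex l' h - (l' - l)"
proof -
  have "\<And>b. ex l h \<le> b \<longleftrightarrow> ex l' h - (l' - l) \<le> b"
  proof -
    fix b
    have "(2::int)^l' = 2^(l'-l) * 2^l" "(2::int)^(b + (l'-l)) = 2^(l'-l) * 2^b"
      using assms by (simp_all flip: power_add)
    hence "(2::int)^l dvd 2^b * h \<longleftrightarrow> (2::int)^l' dvd 2^(b + (l'-l)) * h"
      by (simp add: mult.assoc)
    thus "ex l h \<le> b \<longleftrightarrow> ex l' h - (l' - l) \<le> b" unfolding ex_le_iff[symmetric] by linarith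
  qed
  thus ?thesis by (metis le_antisym order_refl)
qed

lemma ex_up:
  assumes "l \<le> l'"
  shows "ex l' (2^(l'-l) * h) = ex l h"
proof -
  have "\<And>b. ex l' (2^(l'-l) * h) \<le> b \<longleftrightarrow> ex l h \<le> b"
  proof -
    fix b
    have e: "(2::int)^l' = 2^(l'-l) * 2^l"
      using assms by (simp flip: power_add)
    have "(2::int)^l' dvd 2^b * (2^(l'-l) * h) \<longleftrightarrow> 2^(l'-l) * 2^l dvd 2^(l'-l) * (2^b * h)"
      unfolding e by (simp add: algebra_simps)
    also have "\<dots> \<longleftrightarrow> 2^l dvd 2^b * h" by simp
    finally show "ex l' (2^(l'-l) * h) \<le> b \<longleftrightarrow> ex l h \<le> b" unfolding ex_le_iff .
  qed
  thus ?thesis by (metis le_antisym order_refl)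
qed



definition single :: "nat \<Rightarrow> nat \<Rightarrow> int \<Rightarrow> (nat \<Rightarrow> int)" where
  "single n j v = (\<lambda>i\<in>{1..n}. if i = j then v else 0)"

definition Dm :: "nat \<Rightarrow> (nat \<Rightarrow> nat) \<Rightarrow> (nat \<Rightarrow> int) \<Rightarrow> (nat \<Rightarrow> int) \<Rightarrow> (nat \<Rightarrow> int)" where
  "Dm n lam u x = (\<lambda>i\<in>{1..n}. (u i * x i) mod 2^lam i)"

definition Sh :: "nat \<Rightarrow> (nat \<Rightarrow> nat) \<Rightarrow> nat \<Rightarrow> nat \<Rightarrow> int \<Rightarrow> (nat \<Rightarrow> int) \<Rightarrow> (nat \<Rightarrow> int)" where
  "Sh n lam j k c x = (\<lambda>i\<in>{1..n}. if i = k then (x k + c * x j) mod 2^lam k else x i)"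

lemma carrG: "carrier (Gp n lam) = (\<Pi>\<^sub>E i\<in>{1..n}. {0..<2^lam i})"
  by (simp add: Gp_def carrier_integer_mod_group)

lemma multG: "x \<otimes>\<^bsub>Gp n lam\<^esub> y = (\<lambda>i\<in>{1..n}. (x i + y i) mod 2^lam i)"
  by (simp add: Gp_def)

lemma oneG: "\<one>\<^bsub>Gp n lam\<^esub> = (\<lambda>i\<in>{1..n}. 0)"
  by (simp add: Gp_def)

lemma grpG: "group (Gp n lam)"
  by (simp add: Gp_def)

lemma invG: "x \<in> carrier (Gp n lam) \<Longrightarrow> inv\<^bsub>Gp n lam\<^esub> x = (\<lambda>i\<in>{1..n}. (- x i) mod 2^lam i)"
  unfolding Gp_def apply (subst inv_product_group)
    apply simp
   apply (simp add: carrier_integer_mod_group)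
  apply (rule restrict_ext)
  apply (subst inv_integer_mod_group)
   apply (auto simp: PiE_iff carrier_integer_mod_group)
  done

lemma finG: "finite (carrier (Gp n lam))"
  by (simp add: carrG finite_PiE)

lemma memG: "x \<in> carrier (Gp n lam) \<Longrightarrow> i \<in> {1..n} \<Longrightarrow> 0 \<le> x i \<and> x i < 2^lam i"
  by (auto simp: carrG PiE_iff)

lemma memG_out: "x \<in> carrier (Gp n lam) \<Longrightarrow> i \<notin> {1..n} \<Longrightarrow> x i = undefined"
  unfolding carrG by (rule PiE_arb)

lemma memG_mod: "x \<in> carrier (Gp n lam) \<Longrightarrow> i \<in> {1..n} \<Longrightarrow> x i mod 2^lam i = x i"
  using memG by simp

lemma memGI:
  assumes "\<And>i. i \<in> {1..n} \<Longrightarrow> 0 \<le> x i \<and> x i < 2^lam i" "\<And>i. i \<notin> {1..n} \<Longrightarrow> x i = undefined"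
  shows "x \<in> carrier (Gp n lam)"
  unfolding carrG by (rule PiE_I) (use assms in auto)

lemma restrict_modG: "(\<lambda>i\<in>{1..n}. (f i) mod 2^lam i) \<in> carrier (Gp n lam)"
  by (rule memGI) auto

lemma single_carr: "j \<in> {1..n} \<Longrightarrow> 0 \<le> v \<Longrightarrow> v < 2^lam j \<Longrightarrow> single n j v \<in> carrier (Gp n lam)"
  by (rule memGI) (auto simp: single_def)

lemma eq_carrI: "x \<in> carrier (Gp n lam) \<Longrightarrow> y \<in> carrier (Gp n lam) \<Longrightarrow> (\<And>i. i \<in> {1..n} \<Longrightarrow> x i = y i) \<Longrightarrow> x = y"
  unfolding carrG by (rule PiE_ext)

lemma powG: "x \<in> carrier (Gp n lam) \<Longrightarrow> x [^]\<^bsub>Gp n lam\<^esub> (t::nat) = (\<lambda>i\<in>{1..n}. (int t * x i) mod 2^lam i)"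
proof (induction t)
  case 0
  then show ?case by (simp add: oneG)
next
  case (Suc t)
  interpret group "Gp n lam" by (rule grpG)
  have "x [^]\<^bsub>Gp n lam\<^esub> Suc t = x [^]\<^bsub>Gp n lam\<^esub> t \<otimes>\<^bsub>Gp n lam\<^esub> x" by simp
  also have "\<dots> = (\<lambda>i\<in>{1..n}. (int (Suc t) * x i) mod 2^lam i)"
    unfolding Suc.IH[OF Suc.prems] multG
    by (rule restrict_ext) (simp add: mod_add_left_eq mod_add_right_eq algebra_simps)
  finally show ?case .
qed

lemma iso_of_inj:
  assumes "h \<in> hom (Gp n lam) (Gp n lam)" "inj_on h (carrier (Gp n lam))"
  shows "h \<in> iso (Gp n lam) (Gp n lam)"
proof -
  have "h ` carrier (Gp n lam) \<subseteq> carrier (Gp n lam)" using assms(1) by (auto simp: hom_def)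
  hence "h ` carrier (Gp n lam) = carrier (Gp n lam)" using endo_inj_surj[OF finG _ assms(2)] by blast
  thus ?thesis using assms by (simp add: iso_def bij_betw_def)
qed

lemma homI':
  assumes "\<And>x. x \<in> carrier (Gp n lam) \<Longrightarrow> h x \<in> carrier (Gp n lam)"
    "\<And>x y. x \<in> carrier (Gp n lam) \<Longrightarrow> y \<in> carrier (Gp n lam) \<Longrightarrow> h (x \<otimes>\<^bsub>Gp n lam\<^esub> y) = h x \<otimes>\<^bsub>Gp n lam\<^esub> h y"
  shows "h \<in> hom (Gp n lam) (Gp n lam)"
  using assms by (auto simp: hom_def)

lemma Dm_iso:
  assumes "\<And>i. i \<in> {1..n} \<Longrightarrow> odd (u i)"
  shows "Dm n lam u \<in> iso (Gp n lam) (Gp n lam)"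
proof (rule iso_of_inj)
  show "Dm n lam u \<in> hom (Gp n lam) (Gp n lam)"
  proof (rule homI')
    fix x assume "x \<in> carrier (Gp n lam)"
    show "Dm n lam u x \<in> carrier (Gp n lam)" unfolding Dm_def by (rule restrict_modG)
  next
    fix x y assume "x \<in> carrier (Gp n lam)" "y \<in> carrier (Gp n lam)"
    show "Dm n lam u (x \<otimes>\<^bsub>Gp n lam\<^esub> y) = Dm n lam u x \<otimes>\<^bsub>Gp n lam\<^esub> Dm n lam u y"
      unfolding Dm_def multG
      by (rule restrict_ext) (simp add: mod_mult_right_eq mod_add_eq distrib_left)
  qed
next
  show "inj_on (Dm n lam u) (carrier (Gp n lam))"
  proof (rule inj_onI)
    fix x y assume xy: "x \<in> carrier (Gp n lam)" "y \<in> carrier (Gp n lam)" "Dm n lam u x = Dm n lam u y"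
    show "x = y"
    proof (rule eq_carrI[OF xy(1,2)])
      fix i assume i: "i \<in> {1..n}"
      have "(u i * x i) mod 2^lam i = (u i * y i) mod 2^lam i"
        using fun_cong[OF xy(3), of i] i by (simp add: Dm_def)
      hence "x i mod 2^lam i = y i mod 2^lam i" using unit_cancel assms i by blast
      thus "x i = y i" using memG_mod xy i by metis
    qed
  qed
qed

lemma mod_mult_dvd_cong:
  assumes "(pk::int) dvd c * pj"
  shows "(c * (z mod pj)) mod pk = (c * z) mod pk"
proof -
  obtain q where q: "c * pj = pk * q" using assms by blast
  have "c * (z mod pj) = c * z + (- (z div pj) * q) * pk"
    using q by (simp add: algebra_simps minus_div_mult_eq_mod[symmetric])
  thus ?thesis by (simp only: mod_mult_self1)
qed

lemma Sh_iso:
  assumes "j \<in> {1..n}" "k \<in> {1..n}" "j \<noteq> k" "(2::int)^lam k dvd c * 2^lam j"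
  shows "Sh n lam j k c \<in> iso (Gp n lam) (Gp n lam)"
proof (rule iso_of_inj)
  show "Sh n lam j k c \<in> hom (Gp n lam) (Gp n lam)"
  proof (rule homI')
    fix x assume x: "x \<in> carrier (Gp n lam)"
    show "Sh n lam j k c x \<in> carrier (Gp n lam)"
      by (rule memGI) (use x memG in \<open>auto simp: Sh_def\<close>)
  next
    fix x y assume xy: "x \<in> carrier (Gp n lam)" "y \<in> carrier (Gp n lam)"
    have key: "(c * ((x j + y j) mod 2^lam j)) mod 2^lam k = (c * (x j + y j)) mod 2^lam k"
      by (rule mod_mult_dvd_cong[OF assms(4)])
    show "Sh n lam j k c (x \<otimes>\<^bsub>Gp n lam\<^esub> y) = Sh n lam j k c x \<otimes>\<^bsub>Gp n lam\<^esub> Sh n lam j k c y"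
      unfolding Sh_def multG
    proof (rule restrict_ext)
      fix i assume i: "i \<in> {1..n}"
      show "(if i = k then ((\<lambda>i\<in>{1..n}. (x i + y i) mod 2 ^ lam i) k + c * (\<lambda>i\<in>{1..n}. (x i + y i) mod 2 ^ lam i) j) mod 2 ^ lam k
          else (\<lambda>i\<in>{1..n}. (x i + y i) mod 2 ^ lam i) i) =
         ((\<lambda>i\<in>{1..n}. if i = k then (x k + c * x j) mod 2 ^ lam k else x i) i +
          (\<lambda>i\<in>{1..n}. if i = k then (y k + c * y j) mod 2 ^ lam k else y i) i) mod 2 ^ lam i"
      proof (cases "i = k")
        case True
        have "((x k + y k) mod 2 ^ lam k + c * ((x j + y j) mod 2 ^ lam j)) mod 2 ^ lam k
            = ((x k + y k) + (c * ((x j + y j) mod 2 ^ lam j)) mod 2 ^ lam k) mod 2 ^ lam k"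
          by (simp only: mod_add_left_eq mod_add_right_eq)
        also have "\<dots> = ((x k + y k) + (c * (x j + y j))) mod 2 ^ lam k" unfolding key by (simp only: mod_add_right_eq)
        also have "\<dots> = ((x k + c * x j) mod 2 ^ lam k + (y k + c * y j) mod 2 ^ lam k) mod 2 ^ lam k"
          by (simp add: mod_add_eq algebra_simps)
        finally show ?thesis using True i assms by simp
      next
        case False
        then show ?thesis using i by simp
      qed
    qed
  qed
next
  show "inj_on (Sh n lam j k c) (carrier (Gp n lam))"
  proof (rule inj_onI)
    fix x y assume xy: "x \<in> carrier (Gp n lam)" "y \<in> carrier (Gp n lam)" "Sh n lam j k c x = Sh n lam j k c y"
    have o: "x i = y i" if "i \<in> {1..n}" "i \<noteq> k" for i
      using fun_cong[OF xy(3), of i] that by (simp add: Sh_def)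
    have xj: "x j = y j" using o assms by blast
    have "(x k + c * x j) mod 2^lam k = (y k + c * x j) mod 2^lam k"
      using fun_cong[OF xy(3), of k] assms xj by (simp add: Sh_def)
    hence "((x k + c * x j) mod 2^lam k - c * x j) mod 2^lam k = ((y k + c * x j) mod 2^lam k - c * x j) mod 2^lam k"
      by simp
    hence "x k mod 2^lam k = y k mod 2^lam k" by (simp add: mod_diff_left_eq)
    hence "x k = y k" using memG_mod xy assms by metis
    thus "x = y" using o by (intro eq_carrI[OF xy(1,2)]) (metis)
  qed
qed

lemma Dm_comm:
  assumes "x \<in> carrier (Gp n lam)"
  shows "Dm n lam u x \<otimes>\<^bsub>Gp n lam\<^esub> inv\<^bsub>Gp n lam\<^esub> x = (\<lambda>i\<in>{1..n}. ((u i - 1) * x i) mod 2^lam i)"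
  unfolding Dm_def multG invG[OF assms]
  by (rule restrict_ext) (simp add: mod_add_eq algebra_simps)

lemma Sh_comm:
  assumes "x \<in> carrier (Gp n lam)" "k \<in> {1..n}"
  shows "Sh n lam j k c x \<otimes>\<^bsub>Gp n lam\<^esub> inv\<^bsub>Gp n lam\<^esub> x = single n k ((c * x j) mod 2^lam k)"
  unfolding Sh_def multG invG[OF assms(1)] single_def
proof (rule restrict_ext)
  fix i assume i: "i \<in> {1..n}"
  show "((\<lambda>i\<in>{1..n}. if i = k then (x k + c * x j) mod 2 ^ lam k else x i) i +
          (\<lambda>i\<in>{1..n}. - x i mod 2 ^ lam i) i) mod 2 ^ lam i =
         (if i = k then c * x j mod 2 ^ lam k else 0)"
  proof (cases "i = k")
    case True
    have "((x k + c * x j) mod 2 ^ lam k + (- x k) mod 2 ^ lam k) mod 2 ^ lam k = ((x k + c * x j) + (- x k)) mod 2 ^ lam k"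
      by (rule mod_add_eq)
    thus ?thesis using True i by simp
  next
    case False
    thus ?thesis using i by (simp add: mod_add_right_eq)
  qed
qed



definition part :: "nat \<Rightarrow> (nat \<Rightarrow> int) \<Rightarrow> nat \<Rightarrow> (nat \<Rightarrow> int)" where
  "part n g k = (\<lambda>i\<in>{1..n}. if i \<le> k then g i else 0)"

lemma part_carr: "g \<in> carrier (Gp n lam) \<Longrightarrow> part n g k \<in> carrier (Gp n lam)"
  by (rule memGI) (auto simp: part_def dest: memG)

lemma part_0: "part n g 0 = \<one>\<^bsub>Gp n lam\<^esub>"
  unfolding part_def oneG by (rule restrict_ext) simp

lemma part_Suc:
  assumes "g \<in> carrier (Gp n lam)" "Suc k \<le> n"
  shows "part n g (Suc k) = part n g k \<otimes>\<^bsub>Gp n lam\<^esub> single n (Suc k) (g (Suc k))"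
  unfolding part_def multG single_def
  by (rule restrict_ext) (auto simp: memG_mod[OF assms(1)])

lemma part_big: "g \<in> carrier (Gp n lam) \<Longrightarrow> n \<le> k \<Longrightarrow> part n g k = g"
  by (rule eq_carrI[OF part_carr]) (auto simp: part_def)

lemma decomp_mem:
  assumes H: "subgroup H (Gp n lam)" and g: "g \<in> carrier (Gp n lam)"
    and s: "\<And>j. j \<in> {1..n} \<Longrightarrow> single n j (g j) \<in> H"
  shows "g \<in> H"
proof -
  have P: "k \<le> n \<Longrightarrow> part n g k \<in> H" for k
  proof (induction k)
    case 0
    then show ?case using subgroup.one_closed[OF H] by (simp add: part_0[of n g lam])
  next
    case (Suc k)
    hence "part n g k \<in> H" "single n (Suc k) (g (Suc k)) \<in> H" using s by auto
    thus ?case using part_Suc[OF g Suc.prems] subgroup.m_closed[OF H] by simp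
  qed
  have "part n g n \<in> H" by (rule P) simp
  thus ?thesis by (simp add: part_big[OF g])
qed

definition cf :: "nat \<Rightarrow> (nat \<Rightarrow> nat) \<Rightarrow> ((nat \<Rightarrow> int) \<Rightarrow> (nat \<Rightarrow> int)) \<Rightarrow> nat \<Rightarrow> nat \<Rightarrow> int" where
  "cf n lam \<phi> j i = \<phi> (single n j (1 mod 2^lam j)) i"

lemma single_pow:
  assumes "j \<in> {1..n}"
  shows "single n j (1 mod 2^lam j) [^]\<^bsub>Gp n lam\<^esub> (t::nat) = single n j ((int t) mod 2^lam j)"
proof -
  have c: "single n j (1 mod 2^lam j) \<in> carrier (Gp n lam)"
    using assms by (intro single_carr) auto
  show ?thesis unfolding powG[OF c] unfolding single_def
    by (rule restrict_ext) (simp add: mod_mult_right_eq)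
qed

lemma hom_single:
  assumes hom: "\<phi> \<in> hom (Gp n lam) (Gp n lam)" and j: "j \<in> {1..n}" and v: "0 \<le> v" "v < 2^lam j"
  shows "\<phi> (single n j v) = (\<lambda>i\<in>{1..n}. (v * cf n lam \<phi> j i) mod 2^lam i)"
proof -
  have c: "single n j (1 mod 2^lam j) \<in> carrier (Gp n lam)"
    using j by (intro single_carr) auto
  have "single n j v = single n j (1 mod 2^lam j) [^]\<^bsub>Gp n lam\<^esub> (nat v)"
    unfolding single_pow[OF j] using v by simp
  hence "\<phi> (single n j v) = \<phi> (single n j (1 mod 2^lam j)) [^]\<^bsub>Gp n lam\<^esub> (nat v)"
    using hom_nat_pow[OF hom c grpG grpG] by simp
  also have "\<dots> = (\<lambda>i\<in>{1..n}. (v * cf n lam \<phi> j i) mod 2^lam i)"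
    using v hom c by (subst powG) (auto simp: hom_def cf_def)
  finally show ?thesis .
qed

lemma hom_formula:
  assumes hom: "\<phi> \<in> hom (Gp n lam) (Gp n lam)" and g: "g \<in> carrier (Gp n lam)" and i: "i \<in> {1..n}"
  shows "\<phi> g i = (\<Sum>j\<in>{1..n}. g j * cf n lam \<phi> j i) mod 2^lam i"
proof -
  have "k \<le> n \<Longrightarrow> \<phi> (part n g k) = (\<lambda>i\<in>{1..n}. (\<Sum>j\<in>{1..k}. g j * cf n lam \<phi> j i) mod 2^lam i)" for k
  proof (induction k)
    case 0
    have "\<phi> (part n g 0) = \<one>\<^bsub>Gp n lam\<^esub>" unfolding part_0[of n g lam] by (rule hom_one[OF hom grpG grpG])
    then show ?case by (simp add: oneG)
  next
    case (Suc k)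
    have sk: "Suc k \<in> {1..n}" using Suc.prems by simp
    have sc: "single n (Suc k) (g (Suc k)) \<in> carrier (Gp n lam)"
      using memG[OF g sk] sk by (intro single_carr) auto
    have "\<phi> (part n g (Suc k)) = \<phi> (part n g k) \<otimes>\<^bsub>Gp n lam\<^esub> \<phi> (single n (Suc k) (g (Suc k)))"
      unfolding part_Suc[OF g Suc.prems] using hom part_carr[OF g] sc by (simp add: hom_def)
    also have "\<dots> = (\<lambda>i\<in>{1..n}. (\<Sum>j\<in>{1..Suc k}. g j * cf n lam \<phi> j i) mod 2^lam i)"
      unfolding Suc.IH[OF Suc_leD[OF Suc.prems]] hom_single[OF hom sk memG[OF g sk, THEN conjunct1] memG[OF g sk, THEN conjunct2]] multG
      by (rule restrict_ext) (simp add: mod_add_eq)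
    finally show ?case .
  qed
  from this[of n] show ?thesis using part_big[OF g, of n] i by simp
qed

lemma cf_dvd:
  assumes hom: "\<phi> \<in> hom (Gp n lam) (Gp n lam)" and j: "j \<in> {1..n}" and i: "i \<in> {1..n}"
  shows "(2::int)^lam i dvd cf n lam \<phi> j i * 2^lam j"
proof -
  define x where "x = single n j (1 mod 2^lam j)"
  have c: "x \<in> carrier (Gp n lam)"
    using j unfolding x_def by (intro single_carr) auto
  have "x [^]\<^bsub>Gp n lam\<^esub> ((2::nat)^lam j) = \<one>\<^bsub>Gp n lam\<^esub>"
    unfolding x_def single_pow[OF j] unfolding single_def oneG by (rule restrict_ext) simp
  hence "\<phi> x [^]\<^bsub>Gp n lam\<^esub> ((2::nat)^lam j) = \<one>\<^bsub>Gp n lam\<^esub>"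
    using hom_nat_pow[OF hom c grpG grpG, of "2^lam j"] hom_one[OF hom grpG grpG] by simp
  moreover have "\<phi> x \<in> carrier (Gp n lam)" using hom c by (auto simp: hom_def)
  ultimately have "(\<lambda>i\<in>{1..n}. (2^lam j * \<phi> x i) mod 2^lam i) = (\<lambda>i\<in>{1..n}. (0::int))"
    by (simp add: powG oneG)
  from fun_cong[OF this, of i] i show ?thesis by (simp add: dvd_eq_mod_eq_0 mult.commute cf_def x_def)
qed



lemma sub_pow_closed:
  assumes "subgroup H (Gp n lam)" "x \<in> H"
  shows "x [^]\<^bsub>Gp n lam\<^esub> (t::nat) \<in> H"
proof (induction t)
  case 0
  then show ?case using subgroup.one_closed[OF assms(1)] by simp
next
  case (Suc t)
  interpret group "Gp n lam" by (rule grpG)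
  have "x \<in> carrier (Gp n lam)" using assms subgroup.subset by blast
  hence "x [^]\<^bsub>Gp n lam\<^esub> Suc t = x [^]\<^bsub>Gp n lam\<^esub> t \<otimes>\<^bsub>Gp n lam\<^esub> x" by simp
  thus ?case using Suc subgroup.m_closed[OF assms(1)] assms(2) by simp
qed

lemma val_term: "(2::int)^A dvd x \<Longrightarrow> (2::int)^B dvd y \<Longrightarrow> C \<le> A + B \<Longrightarrow> (2::int)^C dvd x * y"
proof -
  assume a: "(2::int)^A dvd x" "(2::int)^B dvd y" "C \<le> A + B"
  have "(2::int)^(A+B) dvd x * y" using mult_dvd_mono[OF a(1,2)] by (simp add: power_add)
  moreover have "(2::int)^C dvd 2^(A+B)" using a(3) by (simp add: le_imp_power_dvd)
  ultimately show ?thesis using dvd_trans by blast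
qed

lemma cf_div:
  assumes hom: "\<phi> \<in> hom (Gp n lam) (Gp n lam)" and j: "j \<in> {1..n}" and i: "i \<in> {1..n}"
  shows "(2::int)^(lam i - lam j) dvd cf n lam \<phi> j i"
proof (cases "lam j \<le> lam i")
  case True
  have "(2::int)^lam i = 2^(lam i - lam j) * 2^lam j" using True by (simp flip: power_add)
  hence "(2::int)^(lam i - lam j) * 2^lam j dvd cf n lam \<phi> j i * 2^lam j"
    using cf_dvd[OF hom j i] by simp
  thus ?thesis by simp
next
  case False
  thus ?thesis by simp
qed

locale S =
  fixes n :: nat and lam m :: "nat \<Rightarrow> nat"
  assumes lmono: "\<And>i. i \<in> {2..n} \<Longrightarrow> lam (i - 1) \<le> lam i"
    and can: "canonical n lam m"
begin

abbreviation "G \<equiv> Gp n lam"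

lemma mL: "i \<in> {1..n} \<Longrightarrow> m i \<le> lam i"
  using can by (auto simp: canonical_def LambdaG_def)

lemma m0: "i \<notin> {1..n} \<Longrightarrow> m i = 0"
  using can by (auto simp: canonical_def LambdaG_def)

lemma mI: "i \<in> {2..n} \<Longrightarrow> m (i - 1) \<le> m i"
  using can by (auto simp: canonical_def)

lemma mII: "i \<in> {1..n-1} \<Longrightarrow> int (m (i+1)) - int (m i) \<le> int (lam (i+1)) - int (lam i)"
  using can by (auto simp: canonical_def)

lemma lam_mono: "1 \<le> i \<Longrightarrow> i \<le> j \<Longrightarrow> j \<le> n \<Longrightarrow> lam i \<le> lam j"
proof (induction j)
  case 0 then show ?case by simp
next
  case (Suc k)
  show ?case
  proof (cases "i = Suc k")
    case False
    hence "lam i \<le> lam k" using Suc by simp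
    moreover have "lam k \<le> lam (Suc k)" using lmono[of "Suc k"] Suc False by simp
    ultimately show ?thesis by simp
  qed simp
qed

lemma m_mono: "1 \<le> i \<Longrightarrow> i \<le> j \<Longrightarrow> j \<le> n \<Longrightarrow> m i \<le> m j"
proof (induction j)
  case 0 then show ?case by simp
next
  case (Suc k)
  show ?case
  proof (cases "i = Suc k")
    case False
    hence "m i \<le> m k" using Suc by simp
    moreover have "m k \<le> m (Suc k)" using mI[of "Suc k"] Suc False by simp
    ultimately show ?thesis by simp
  qed simp
qed

lemma chain: "1 \<le> i \<Longrightarrow> i \<le> j \<Longrightarrow> j \<le> n \<Longrightarrow> int (m j) - int (m i) \<le> int (lam j) - int (lam i)"
proof (induction j)
  case 0 then show ?case by simp
next
  case (Suc k)
  show ?case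
  proof (cases "i = Suc k")
    case False
    hence "int (m k) - int (m i) \<le> int (lam k) - int (lam i)" using Suc by simp
    moreover have "k \<in> {1..n-1}" using Suc False by auto
    hence "int (m (k+1)) - int (m k) \<le> int (lam (k+1)) - int (lam k)" by (rule mII)
    ultimately show ?thesis by simp
  qed simp
qed

definition ND where "ND = {i \<in> {1..n}. \<not> degenerate_at n lam m i}"

lemma ND_sub: "ND \<subseteq> {1..n}" by (auto simp: ND_def)

lemma nd_pos: assumes "i \<in> ND" shows "1 \<le> m i"
proof -
  have i: "i \<in> {1..n}" "m i \<noteq> prev m i" using assms by (auto simp: ND_def degenerate_at_def)
  show ?thesis
  proof (cases "i = 1")
    case True thus ?thesis using i by (simp add: prev_def)
  next
    case False
    hence "m (i-1) \<le> m i" using mI[of i] i by simp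
    thus ?thesis using i False by (simp add: prev_def)
  qed
qed

lemma nd_lt: assumes "i \<in> ND" "1 \<le> j" "j < i" shows "lam j < lam i \<and> m j < m i"
proof -
  have i: "i \<in> {1..n}" "m i \<noteq> prev m i" using assms by (auto simp: ND_def degenerate_at_def)
  have i1: "i \<noteq> 1" using assms by simp
  have a: "m (i-1) \<le> m i" using mI[of i] i i1 by simp
  hence b: "m (i-1) < m i" using i i1 by (simp add: prev_def)
  have "i - 1 \<in> {1..n-1}" using i i1 by auto
  hence c0: "int (m (i-1+1)) - int (m (i-1)) \<le> int (lam (i-1+1)) - int (lam (i-1))" by (rule mII)
  have ii: "i - 1 + 1 = i" using i by simp
  have "int (m i) - int (m (i-1)) \<le> int (lam i) - int (lam (i-1))" using c0 unfolding ii .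
  hence c: "lam (i-1) < lam i" using b i1 by simp
  have "lam j \<le> lam (i-1)" "m j \<le> m (i-1)" using lam_mono[of j "i-1"] m_mono[of j "i-1"] assms i by auto
  thus ?thesis using b c by simp
qed

lemma nd_gt: assumes "i \<in> ND" "i < j" "j \<le> n" shows "int (m j) - int (m i) < int (lam j) - int (lam i)"
proof -
  have i: "i \<in> {1..n}" "\<not> (i \<le> n - 1 \<and> int (m (i + 1)) - int (m i) = int (lam (i + 1)) - int (lam i))"
    using assms by (auto simp: ND_def degenerate_at_def)
  have i2: "i \<in> {1..n-1}" using i assms by auto
  have "int (m (i+1)) - int (m i) \<le> int (lam (i+1)) - int (lam i)" using mII[OF i2] .
  moreover have "int (m (i+1)) - int (m i) \<noteq> int (lam (i+1)) - int (lam i)" using i(2) i2 by auto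
  ultimately have "int (m (i+1)) - int (m i) < int (lam (i+1)) - int (lam i)" by linarith
  moreover have "int (m j) - int (m (i+1)) \<le> int (lam j) - int (lam (i+1))" using chain[of "i+1" j] assms by simp
  ultimately show ?thesis by simp
qed

definition Lset :: "(nat \<Rightarrow> nat) \<Rightarrow> (nat \<Rightarrow> int) set" where
  "Lset b = {g \<in> carrier G. \<forall>i\<in>{1..n}. ex (lam i) (g i) \<le> b i}"

definition m' where "m' i = (if i \<in> ND then m i - 1 else m i)"

abbreviation "L \<equiv> Lset m"
abbreviation "M \<equiv> Lset m'"

lemma Lset_sub: "subgroup (Lset b) G"
proof -
  interpret group G by (rule grpG)
  show ?thesis
  proof (rule subgroupI)
    show "Lset b \<subseteq> carrier G" by (auto simp: Lset_def)
    show "Lset b \<noteq> {}"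
    proof -
      have "\<one>\<^bsub>G\<^esub> \<in> carrier G" by simp
      hence "\<one>\<^bsub>G\<^esub> \<in> Lset b" by (simp add: Lset_def oneG)
      thus ?thesis by blast
    qed
  next
    fix a assume a: "a \<in> Lset b"
    hence ac: "a \<in> carrier G" by (simp add: Lset_def)
    show "inv\<^bsub>G\<^esub> a \<in> Lset b" using a restrict_modG unfolding Lset_def invG[OF ac] by (auto simp: ex_mod ex_neg)
  next
    fix a c assume a: "a \<in> Lset b" "c \<in> Lset b"
    show "a \<otimes>\<^bsub>G\<^esub> c \<in> Lset b" unfolding Lset_def
    proof (intro CollectI conjI ballI)
      show "a \<otimes>\<^bsub>G\<^esub> c \<in> carrier G" using a by (auto simp: Lset_def)
      fix i assume i: "i \<in> {1..n}"
      have "ex (lam i) (a i) \<le> b i" "ex (lam i) (c i) \<le> b i" using a i by (auto simp: Lset_def)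
      hence "(2::int)^lam i dvd 2^b i * a i" "(2::int)^lam i dvd 2^b i * c i" by (auto simp: ex_le_iff)
      hence "(2::int)^lam i dvd 2^b i * (a i + c i)" by (simp add: distrib_left)
      hence "ex (lam i) (a i + c i) \<le> b i" by (simp add: ex_le_iff)
      thus "ex (lam i) ((a \<otimes>\<^bsub>G\<^esub> c) i) \<le> b i" using i by (simp add: multG ex_mod)
    qed
  qed
qed

lemma m'_le: "m' i \<le> m i" by (simp add: m'_def)

lemma M_sub_L: "M \<subseteq> L"
proof
  fix g assume g: "g \<in> M"
  have "\<forall>i\<in>{1..n}. ex (lam i) (g i) \<le> m i"
  proof
    fix i assume "i \<in> {1..n}"
    hence "ex (lam i) (g i) \<le> m' i" using g unfolding Lset_def by blast
    thus "ex (lam i) (g i) \<le> m i" using m'_le[of i] by linarith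
  qed
  thus "g \<in> L" using g unfolding Lset_def by blast
qed

lemma Tset_eq: "Tset n lam a = {g \<in> carrier G. \<forall>i\<in>{1..n}. ex (lam i) (g i) = a i}"
proof -
  have "\<And>g i. g \<in> carrier G \<Longrightarrow> i \<in> {1..n} \<Longrightarrow>
      group.ord (integer_mod_group (2 ^ lam i)) (g i) = 2 ^ a i \<longleftrightarrow> ex (lam i) (g i) = a i"
  proof -
    fix g i assume "g \<in> carrier G" "i \<in> {1..n}"
    hence "0 \<le> g i" "g i < 2^lam i" using memG by auto
    thus "group.ord (integer_mod_group (2 ^ lam i)) (g i) = 2 ^ a i \<longleftrightarrow> ex (lam i) (g i) = a i"
      using ord_eq by simp
  qed
  thus ?thesis unfolding Tset_def by auto
qed

definition wit :: "(nat \<Rightarrow> nat) \<Rightarrow> (nat \<Rightarrow> int)" where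
  "wit a = (\<lambda>i\<in>{1..n}. 2^(lam i - a i) mod 2^lam i)"

lemma wit_T: "a \<in> LambdaG n lam \<Longrightarrow> wit a \<in> Tset n lam a"
  unfolding Tset_eq
proof (intro CollectI conjI ballI)
  assume a: "a \<in> LambdaG n lam"
  show "wit a \<in> carrier G" unfolding wit_def by (rule restrict_modG)
  fix i assume i: "i \<in> {1..n}"
  have "a i \<le> lam i" using a i by (auto simp: LambdaG_def)
  thus "ex (lam i) (wit a i) = a i" using i by (simp add: wit_def ex_mod ex_pow)
qed

lemma T_nonempty: "a \<in> LambdaG n lam \<Longrightarrow> \<exists>g. g \<in> Tset n lam a"
  using wit_T by blast

end



context S begin

lemma L_dvd: "g \<in> L \<Longrightarrow> j \<in> {1..n} \<Longrightarrow> (2::int)^(lam j - m j) dvd g j"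
  using ex_le_iff2[OF mL, of j "g j"] unfolding Lset_def by auto

lemma L_carr: "g \<in> Lset b \<Longrightarrow> g \<in> carrier G"
  unfolding Lset_def by auto

lemma term_L:
  assumes hom: "\<phi> \<in> hom G G" and g: "g \<in> L" and i: "i \<in> {1..n}" and j: "j \<in> {1..n}"
  shows "(2::int)^(lam i - m i) dvd g j * cf n lam \<phi> j i"
proof (rule val_term[OF L_dvd[OF g j] cf_div[OF hom j i]])
  have mi: "m i \<le> lam i" and mj: "m j \<le> lam j" using mL i j by auto
  show "lam i - m i \<le> lam j - m j + (lam i - lam j)"
  proof (cases "j \<le> i")
    case True
    have "lam j \<le> lam i" "m j \<le> m i" using lam_mono[of j i] m_mono[of j i] True i j by auto
    thus ?thesis using mi mj by linarith
  next
    case False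
    have "lam i \<le> lam j" using lam_mono[of i j] False i j by auto
    moreover have "int (m j) - int (m i) \<le> int (lam j) - int (lam i)" using chain[of i j] False i j by auto
    ultimately show ?thesis using mi mj by linarith
  qed
qed

lemma K3a:
  assumes hom: "\<phi> \<in> hom G G" and g: "g \<in> L"
  shows "\<phi> g \<in> L"
proof -
  have gc: "g \<in> carrier G" using g by (rule L_carr)
  have "\<phi> g \<in> carrier G" using hom gc by (auto simp: hom_def)
  moreover have "\<forall>i\<in>{1..n}. ex (lam i) (\<phi> g i) \<le> m i"
  proof
    fix i assume i: "i \<in> {1..n}"
    have "(2::int)^(lam i - m i) dvd (\<Sum>j\<in>{1..n}. g j * cf n lam \<phi> j i)"
      by (rule dvd_sum) (rule term_L[OF hom g i], simp)
    hence "ex (lam i) (\<Sum>j\<in>{1..n}. g j * cf n lam \<phi> j i) \<le> m i"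
      using ex_le_iff2[OF mL[OF i]] by simp
    thus "ex (lam i) (\<phi> g i) \<le> m i" unfolding hom_formula[OF hom gc i] ex_mod .
  qed
  ultimately show ?thesis unfolding Lset_def by blast
qed

lemma term_nd:
  assumes hom: "\<phi> \<in> hom G G" and g: "g \<in> L" and i: "i \<in> ND" and j: "j \<in> {1..n}" and ji: "j \<noteq> i"
  shows "(2::int)^(lam i - m i + 1) dvd g j * cf n lam \<phi> j i"
proof -
  have i': "i \<in> {1..n}" using i ND_sub by auto
  show ?thesis
  proof (rule val_term[OF L_dvd[OF g j] cf_div[OF hom j i']])
    have mi: "m i \<le> lam i" and mj: "m j \<le> lam j" using mL i' j by auto
    show "lam i - m i + 1 \<le> lam j - m j + (lam i - lam j)"
    proof (cases "j < i")
      case True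
      have "lam j < lam i" "m j < m i" using nd_lt[OF i, of j] True j by auto
      thus ?thesis using mi mj by linarith
    next
      case False
      hence "i < j" using ji by simp
      hence "int (m j) - int (m i) < int (lam j) - int (lam i)" using nd_gt[OF i] j by auto
      thus ?thesis using mi mj by linarith
    qed
  qed
qed

lemma sum_split:
  assumes "i \<in> {1..n}"
  shows "(\<Sum>j\<in>{1..n}. f j) = f i + (\<Sum>j\<in>{1..n} - {i}. f j)"
  using sum.remove[OF finite_atLeastAtMost assms] .

lemma nd_basic: assumes "i \<in> ND" shows "i \<in> {1..n}" "1 \<le> m i" "m i \<le> lam i"
  using assms ND_sub nd_pos mL by auto

lemma rest_dvd:
  assumes hom: "\<phi> \<in> hom G G" and g: "g \<in> L" and i: "i \<in> ND"
  shows "(2::int)^(lam i - m i + 1) dvd (\<Sum>j\<in>{1..n} - {i}. g j * cf n lam \<phi> j i)"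
  by (rule dvd_sum) (rule term_nd[OF hom g i], auto)

lemma c_odd:
  assumes iso: "\<phi> \<in> iso G G" and i: "i \<in> ND"
  shows "odd (cf n lam \<phi> i i)"
proof (rule ccontr)
  assume ev: "\<not> odd (cf n lam \<phi> i i)"
  have hom: "\<phi> \<in> hom G G" using iso by (simp add: iso_def)
  note ib = nd_basic[OF i]
  define k where "k = lam i - m i"
  define L' where "L' = {x \<in> L. (2::int)^(k+1) dvd x i}"
  have kl: "k + 1 \<le> lam i" using ib unfolding k_def by simp
  have sub: "\<phi> ` L \<subseteq> L'"
  proof
    fix y assume "y \<in> \<phi> ` L"
    then obtain g where g: "g \<in> L" "y = \<phi> g" by blast
    have gc: "g \<in> carrier G" using g by (simp add: L_carr)
    have t1: "(2::int)^(k+1) dvd g i * cf n lam \<phi> i i"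
      using val_term[OF L_dvd[OF g(1) ib(1)], of 1 "cf n lam \<phi> i i" "k+1"] ev unfolding k_def by simp
    have "(2::int)^(k+1) dvd (\<Sum>j\<in>{1..n}. g j * cf n lam \<phi> j i)"
      unfolding sum_split[OF ib(1)] using t1 rest_dvd[OF hom g(1) i] unfolding k_def by simp
    moreover have "(2::int)^(k+1) dvd 2^lam i" by (rule iffD2[OF p2_dvd_iff kl])
    ultimately have "(2::int)^(k+1) dvd \<phi> g i" unfolding hom_formula[OF hom gc ib(1)] by (simp add: dvd_mod)
    thus "y \<in> L'" using K3a[OF hom g(1)] g unfolding L'_def by simp
  qed
  define w where "w = single n i (2^k)"
  have wL: "w \<in> L"
  proof -
    have "(2::int)^k < 2^lam i" using kl by simp
    hence wc: "w \<in> carrier G" unfolding w_def using ib by (intro single_carr) auto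
    have "\<forall>j\<in>{1..n}. ex (lam j) (w j) \<le> m j"
    proof
      fix j assume "j \<in> {1..n}"
      thus "ex (lam j) (w j) \<le> m j"
        using ex_pow[OF ib(3)] unfolding w_def single_def k_def by auto
    qed
    thus ?thesis using wc unfolding Lset_def by blast
  qed
  have wL': "w \<notin> L'"
  proof
    assume "w \<in> L'"
    hence "(2::int)^(k+1) dvd 2^k" unfolding L'_def w_def single_def using ib by simp
    thus False by (simp add: p2_dvd_iff)
  qed
  have finL: "finite L" using finG by (rule rev_finite_subset) (auto simp: Lset_def)
  have psub: "L' \<subset> L" using wL wL' unfolding L'_def by blast
  have inj: "inj_on \<phi> L"
    using iso by (auto simp: iso_def bij_betw_def Lset_def intro: inj_on_subset)
  have "card L = card (\<phi> ` L)" using card_image[OF inj] by simp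
  also have "\<dots> \<le> card L'" using sub finL psub by (intro card_mono) (auto intro: rev_finite_subset)
  also have "\<dots> < card L" using psub finL by (rule psubset_card_mono[rotated])
  finally show False by simp
qed

lemma bit_pres:
  assumes iso: "\<phi> \<in> iso G G" and g: "g \<in> L" and i: "i \<in> ND"
  shows "bitv (lam i) (m i) (\<phi> g i) = bitv (lam i) (m i) (g i)"
proof -
  have hom: "\<phi> \<in> hom G G" using iso by (simp add: iso_def)
  note ib = nd_basic[OF i]
  have gc: "g \<in> carrier G" using g by (simp add: L_carr)
  define k where "k = lam i - m i"
  define c where "c = cf n lam \<phi> i i"
  have co: "odd c" using c_odd[OF iso i] unfolding c_def .
  obtain a where a: "g i = 2^k * a" using L_dvd[OF g ib(1)] unfolding k_def by blast
  have e1: "ex (lam i) z < m i \<longleftrightarrow> (2::int)^(k+1) dvd z" for z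
    using ex_lt_iff[OF ib(2,3)] unfolding k_def by simp
  have "(2::int)^(k+1) dvd (\<Sum>j\<in>{1..n}. g j * cf n lam \<phi> j i) \<longleftrightarrow> (2::int)^(k+1) dvd g i * c"
    unfolding sum_split[OF ib(1)] c_def using rest_dvd[OF hom g i] unfolding k_def
    by (simp add: dvd_add_left_iff)
  also have "\<dots> \<longleftrightarrow> even (a * c)" unfolding a by (simp add: mult.assoc)
  also have "\<dots> \<longleftrightarrow> even a" using co by simp
  also have "\<dots> \<longleftrightarrow> (2::int)^(k+1) dvd g i" unfolding a by simp
  finally have "ex (lam i) (\<phi> g i) < m i \<longleftrightarrow> ex (lam i) (g i) < m i"
    unfolding hom_formula[OF hom gc ib(1)] ex_mod e1 .
  thus ?thesis unfolding bitv_def by simp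
qed

end



context S begin

lemma char_iso: "characteristic H G \<Longrightarrow> \<phi> \<in> iso G G \<Longrightarrow> h \<in> H \<Longrightarrow> \<phi> h \<in> H"
  unfolding characteristic_def by blast

lemma char_sub: "characteristic H G \<Longrightarrow> subgroup H G"
  unfolding characteristic_def by blast

lemma zero_Lam: "(\<lambda>_. 0) \<in> LambdaG n lam"
  by (simp add: LambdaG_def)

lemma Tset_zero: "Tset n lam (\<lambda>_. 0) \<subseteq> {\<one>\<^bsub>G\<^esub>}"
proof
  fix g assume "g \<in> Tset n lam (\<lambda>_. 0)"
  hence g: "g \<in> carrier G" "\<And>i. i \<in> {1..n} \<Longrightarrow> ex (lam i) (g i) = 0" unfolding Tset_eq by auto
  have "g = \<one>\<^bsub>G\<^esub>"
  proof (rule eq_carrI[OF g(1)])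
    interpret group G by (rule grpG)
    show "\<one>\<^bsub>G\<^esub> \<in> carrier G" by simp
    fix i assume i: "i \<in> {1..n}"
    have "g i = 0" using ex_0_iff[of "g i" "lam i"] memG[OF g(1) i] g(2)[OF i] by simp
    thus "g i = \<one>\<^bsub>G\<^esub> i" using i by (simp add: oneG)
  qed
  thus "g \<in> {\<one>\<^bsub>G\<^esub>}" by simp
qed

lemma S_fin: "i \<in> {1..n} \<Longrightarrow> finite {a i | a. a \<in> LambdaG n lam \<and> P a}"
  by (rule finite_subset[of _ "{..lam i}"]) (auto simp: LambdaG_def)

lemma S_ne: "subgroup H G \<Longrightarrow> {a i | a. a \<in> LambdaG n lam \<and> Tset n lam a \<subseteq> H} \<noteq> {}"
proof -
  assume "subgroup H G"
  hence "Tset n lam (\<lambda>_. 0) \<subseteq> H" using Tset_zero subgroup.one_closed by blast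
  thus ?thesis using zero_Lam by blast
qed

lemma char_Max_ge:
  assumes "char_below n lam m H" "i \<in> {1..n}" "a \<in> LambdaG n lam" "Tset n lam a \<subseteq> H"
  shows "a i \<le> m i"
proof -
  have "m i = Max {a i | a. a \<in> LambdaG n lam \<and> Tset n lam a \<subseteq> H}" using assms unfolding char_below_def by blast
  moreover have "a i \<le> Max {a i | a. a \<in> LambdaG n lam \<and> Tset n lam a \<subseteq> H}"
    by (rule Max_ge[OF S_fin[OF assms(2)]]) (use assms in blast)
  ultimately show ?thesis by simp
qed

lemma char_Max_in:
  assumes "char_below n lam m H" "i \<in> {1..n}"
  shows "\<exists>h\<in>H. ex (lam i) (h i) = m i"
proof -
  have sg: "subgroup H G" using assms(1) unfolding char_below_def characteristic_def by blast
  have "m i = Max {a i | a. a \<in> LambdaG n lam \<and> Tset n lam a \<subseteq> H}" using assms unfolding char_below_def by blast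
  moreover have "Max {a i | a. a \<in> LambdaG n lam \<and> Tset n lam a \<subseteq> H} \<in> {a i | a. a \<in> LambdaG n lam \<and> Tset n lam a \<subseteq> H}"
    by (rule Max_in[OF S_fin[OF assms(2)] S_ne[OF sg]])
  ultimately obtain a where a: "a \<in> LambdaG n lam" "Tset n lam a \<subseteq> H" "a i = m i" by auto
  have "wit a \<in> H" using wit_T[OF a(1)] a(2) by blast
  moreover have "ex (lam i) (wit a i) = m i" using wit_T[OF a(1)] a(3) assms(2) unfolding Tset_eq by auto
  ultimately show ?thesis by blast
qed

lemma char_H_L:
  assumes cb: "char_below n lam m H"
  shows "H \<subseteq> L"
proof
  fix h assume h: "h \<in> H"
  have ch: "characteristic H G" using cb unfolding char_below_def by blast
  have hc: "h \<in> carrier G" using h subgroup.subset[OF char_sub[OF ch]] by blast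
  define a where "a = (\<lambda>i. if i \<in> {1..n} then ex (lam i) (h i) else 0)"
  have aL: "a \<in> LambdaG n lam" unfolding a_def LambdaG_def by (auto simp: ex_le)
  have "Tset n lam a \<subseteq> H"
  proof
    fix g assume "g \<in> Tset n lam a"
    hence g: "g \<in> carrier G" "\<And>i. i \<in> {1..n} \<Longrightarrow> ex (lam i) (g i) = ex (lam i) (h i)"
      unfolding Tset_eq a_def by auto
    define u where "u = (\<lambda>i. SOME u. odd u \<and> (u * h i) mod 2^lam i = g i mod 2^lam i)"
    have u: "odd (u i) \<and> (u i * h i) mod 2^lam i = g i mod 2^lam i" if "i \<in> {1..n}" for i
      unfolding u_def by (rule someI_ex) (rule trans_unit, simp add: g(2)[OF that])
    have "Dm n lam u h = g"
    proof (rule eq_carrI)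
      show "Dm n lam u h \<in> carrier G" unfolding Dm_def by (rule restrict_modG)
      show "g \<in> carrier G" by (rule g(1))
      fix i assume i: "i \<in> {1..n}"
      show "Dm n lam u h i = g i" using u[OF i] memG_mod[OF g(1) i] i by (simp add: Dm_def)
    qed
    moreover have "Dm n lam u \<in> iso G G" by (rule Dm_iso) (use u in blast)
    ultimately show "g \<in> H" using char_iso[OF ch _ h] by metis
  qed
  hence "\<forall>i\<in>{1..n}. a i \<le> m i" using char_Max_ge[OF cb _ aL] by blast
  thus "h \<in> L" using hc unfolding Lset_def a_def by auto
qed

lemma single_pow_gen:
  assumes "j \<in> {1..n}" "0 \<le> y" "y < 2^lam j"
  shows "single n j y [^]\<^bsub>G\<^esub> (t::nat) = single n j ((int t * y) mod 2^lam j)"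
  unfolding powG[OF single_carr[where lam=lam, OF assms]] unfolding single_def
  by (rule restrict_ext) simp

lemma gen_single:
  assumes cb: "char_below n lam m H" and j: "j \<in> {1..n}"
  shows "\<exists>y. 0 \<le> y \<and> y < 2^lam j \<and> m' j \<le> ex (lam j) y \<and> single n j y \<in> H"
proof -
  have ch: "characteristic H G" using cb unfolding char_below_def by blast
  have sg: "subgroup H G" by (rule char_sub[OF ch])
  interpret group G by (rule grpG)
  have Hc: "H \<subseteq> carrier G" using subgroup.subset[OF sg] .
  have comm: "\<phi> h \<otimes>\<^bsub>G\<^esub> inv\<^bsub>G\<^esub> h \<in> H" if "\<phi> \<in> iso G G" "h \<in> H" for \<phi> h
    using subgroup.m_closed[OF sg char_iso[OF ch that] subgroup.m_inv_closed[OF sg that(2)]] .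
  show ?thesis
  proof (cases "m' j = 0")
    case True
    have "single n j 0 = \<one>\<^bsub>G\<^esub>" unfolding single_def oneG by (rule restrict_ext) simp
    hence "single n j 0 \<in> H" using subgroup.one_closed[OF sg] by simp
    thus ?thesis using True by (intro exI[of _ 0]) simp
  next
    case m'pos: False
    show ?thesis
    proof (cases "j \<in> ND")
      case True
      obtain h where h: "h \<in> H" "ex (lam j) (h j) = m j" using char_Max_in[OF cb j] by blast
      define u where "u = (\<lambda>i. if i = j then -1 else (1::int))"
      have "Dm n lam u \<in> iso G G" by (rule Dm_iso) (simp add: u_def)
      hence "Dm n lam u h \<otimes>\<^bsub>G\<^esub> inv\<^bsub>G\<^esub> h \<in> H" using comm h by blast
      moreover have "Dm n lam u h \<otimes>\<^bsub>G\<^esub> inv\<^bsub>G\<^esub> h = single n j ((-2 * h j) mod 2^lam j)"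
        unfolding Dm_comm[OF subsetD[OF Hc h(1)]] single_def
        by (rule restrict_ext) (simp add: u_def)
      moreover have "ex (lam j) ((-2 * h j) mod 2^lam j) = m' j"
        unfolding ex_mod ex_m2 h(2) m'_def using True by simp
      ultimately show ?thesis by (intro exI[of _ "(-2 * h j) mod 2^lam j"]) simp
    next
      case False
      have mj: "m' j = m j" using False by (simp add: m'_def)
      have deg: "m j = prev m j \<or> (j \<le> n - 1 \<and> int (m (j + 1)) - int (m j) = int (lam (j + 1)) - int (lam j))"
        using False j unfolding ND_def degenerate_at_def by auto
      show ?thesis
      proof (cases "j \<le> n - 1 \<and> int (m (j + 1)) - int (m j) = int (lam (j + 1)) - int (lam j)")
        case True
        have j1: "j + 1 \<in> {1..n}" using True j by auto
        obtain h where h: "h \<in> H" "ex (lam (j+1)) (h (j+1)) = m (j+1)" using char_Max_in[OF cb j1] by blast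
        have ll: "lam j \<le> lam (j+1)" using lam_mono[of j "j+1"] j j1 by auto
        have "(2::int)^lam j dvd 1 * 2^lam (j+1)" using ll by (simp add: p2_dvd_iff)
        hence "Sh n lam (j+1) j 1 \<in> iso G G" using j j1 by (intro Sh_iso) auto
        hence "Sh n lam (j+1) j 1 h \<otimes>\<^bsub>G\<^esub> inv\<^bsub>G\<^esub> h \<in> H" using comm h by blast
        moreover have "Sh n lam (j+1) j 1 h \<otimes>\<^bsub>G\<^esub> inv\<^bsub>G\<^esub> h = single n j ((1 * h (j+1)) mod 2^lam j)"
          by (rule Sh_comm[OF subsetD[OF Hc h(1)] j])
        moreover have "ex (lam j) ((1 * h (j+1)) mod 2^lam j) = m j"
        proof -
          have "ex (lam j) ((1 * h (j+1)) mod 2^lam j) = ex (lam (j+1)) (h (j+1)) - (lam (j+1) - lam j)"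
            using ex_down[OF ll] by (simp add: ex_mod)
          moreover have "m (j+1) - (lam (j+1) - lam j) = m j" using True ll by arith
          ultimately show ?thesis using h(2) by simp
        qed
        ultimately show ?thesis using mj by (intro exI[of _ "(1 * h (j+1)) mod 2^lam j"]) simp
      next
        case False
        hence eq: "m j = prev m j" using deg by blast
        have j2: "j \<noteq> 1" using eq m'pos mj by (auto simp: prev_def)
        hence eq2: "m j = m (j - 1)" using eq by (simp add: prev_def)
        have j1: "j - 1 \<in> {1..n}" using j j2 by auto
        obtain h where h: "h \<in> H" "ex (lam (j-1)) (h (j-1)) = m (j-1)" using char_Max_in[OF cb j1] by blast
        have ll: "lam (j-1) \<le> lam j" using lam_mono[of "j-1" j] j j1 by auto
        define c where "c = (2::int)^(lam j - lam (j-1))"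
        have "c * 2^lam (j-1) = 2^lam j" unfolding c_def using ll by (simp flip: power_add)
        hence "(2::int)^lam j dvd c * 2^lam (j-1)" by simp
        hence "Sh n lam (j-1) j c \<in> iso G G" using j j1 j2 by (intro Sh_iso) auto
        hence "Sh n lam (j-1) j c h \<otimes>\<^bsub>G\<^esub> inv\<^bsub>G\<^esub> h \<in> H" using comm h by blast
        moreover have "Sh n lam (j-1) j c h \<otimes>\<^bsub>G\<^esub> inv\<^bsub>G\<^esub> h = single n j ((c * h (j-1)) mod 2^lam j)"
          by (rule Sh_comm[OF subsetD[OF Hc h(1)] j])
        moreover have "ex (lam j) ((c * h (j-1)) mod 2^lam j) = m j"
          unfolding ex_mod c_def ex_up[OF ll] h(2) eq2 ..
        ultimately show ?thesis using mj by (intro exI[of _ "(c * h (j-1)) mod 2^lam j"]) simp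
      qed
    qed
  qed
qed

lemma char_M_H:
  assumes cb: "char_below n lam m H"
  shows "M \<subseteq> H"
proof
  fix g assume g: "g \<in> M"
  have sg: "subgroup H G" using cb unfolding char_below_def characteristic_def by blast
  have gc: "g \<in> carrier G" using g by (rule L_carr)
  show "g \<in> H"
  proof (rule decomp_mem[OF sg gc])
    fix j assume j: "j \<in> {1..n}"
    obtain y where y: "0 \<le> y" "y < 2^lam j" "m' j \<le> ex (lam j) y" "single n j y \<in> H"
      using gen_single[OF cb j] by blast
    have "ex (lam j) (g j) \<le> m' j" using g j unfolding Lset_def by blast
    then obtain t where t: "(int t * y) mod 2^lam j = g j mod 2^lam j" using cyc y(3) by (meson le_trans)
    have "single n j y [^]\<^bsub>G\<^esub> t = single n j (g j)"
      unfolding single_pow_gen[OF j y(1,2)] t memG_mod[OF gc j] ..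
    thus "single n j (g j) \<in> H" using sub_pow_closed[OF sg y(4), of t] by simp
  qed
qed

end



lemma carrZ: "carrier (Z2pow r) = (\<Pi>\<^sub>E t\<in>{1..r}. {0..<2})"
  by (simp add: Z2pow_def carrier_integer_mod_group)

lemma multZ: "x \<otimes>\<^bsub>Z2pow r\<^esub> y = (\<lambda>t\<in>{1..r}. (x t + y t) mod 2)"
  by (simp add: Z2pow_def)

lemma oneZ: "\<one>\<^bsub>Z2pow r\<^esub> = (\<lambda>t\<in>{1..r}. 0)"
  by (simp add: Z2pow_def)

lemma grpZ: "group (Z2pow r)"
  by (simp add: Z2pow_def)

lemma invZ: "k \<in> carrier (Z2pow r) \<Longrightarrow> inv\<^bsub>Z2pow r\<^esub> k = (\<lambda>t\<in>{1..r}. (- k t) mod 2)"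
  unfolding Z2pow_def apply (subst inv_product_group)
    apply simp
   apply (simp add: carrier_integer_mod_group)
  apply (rule restrict_ext)
  apply (subst inv_integer_mod_group)
   apply (auto simp: PiE_iff carrier_integer_mod_group)
  done

lemma memZ: "k \<in> carrier (Z2pow r) \<Longrightarrow> t \<in> {1..r} \<Longrightarrow> k t = 0 \<or> k t = 1"
proof -
  assume "k \<in> carrier (Z2pow r)" "t \<in> {1..r}"
  hence "0 \<le> k t \<and> k t < 2" unfolding carrZ by (auto simp: PiE_iff)
  thus ?thesis by arith
qed

lemma eqZ: "x \<in> carrier (Z2pow r) \<Longrightarrow> y \<in> carrier (Z2pow r) \<Longrightarrow> (\<And>t. t \<in> {1..r} \<Longrightarrow> x t = y t) \<Longrightarrow> x = y"
  unfolding carrZ by (rule PiE_ext)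

locale T = S +
  fixes \<sigma> :: "nat \<Rightarrow> nat" and r :: nat
  assumes sig: "bij_betw \<sigma> {1..r} ND"
begin

lemma sig_ND: "t \<in> {1..r} \<Longrightarrow> \<sigma> t \<in> ND"
proof -
  assume t: "t \<in> {1..r}"
  have "\<sigma> ` {1..r} = ND" using sig by (simp add: bij_betw_def)
  thus ?thesis using t by blast
qed

lemma sig_surj: "i \<in> ND \<Longrightarrow> \<exists>t\<in>{1..r}. \<sigma> t = i"
proof -
  assume "i \<in> ND"
  hence "i \<in> \<sigma> ` {1..r}" using sig by (simp add: bij_betw_def)
  thus ?thesis by blast
qed

lemma sig_inj: "s \<in> {1..r} \<Longrightarrow> t \<in> {1..r} \<Longrightarrow> \<sigma> s = \<sigma> t \<Longrightarrow> s = t"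
proof -
  assume a: "s \<in> {1..r}" "t \<in> {1..r}" "\<sigma> s = \<sigma> t"
  have "inj_on \<sigma> {1..r}" using sig by (simp add: bij_betw_def)
  thus ?thesis by (rule inj_onD[OF _ a(3) a(1) a(2)])
qed

definition F :: "(nat \<Rightarrow> int) \<Rightarrow> (nat \<Rightarrow> int)" where
  "F g = (\<lambda>t\<in>{1..r}. bitv (lam (\<sigma> t)) (m (\<sigma> t)) (g (\<sigma> t)))"

lemma F_carr: "F g \<in> carrier (Z2pow r)"
  unfolding carrZ F_def by (auto simp: bitv_def)

lemma F_mult:
  assumes g: "g \<in> L" and h: "h \<in> L"
  shows "F (g \<otimes>\<^bsub>G\<^esub> h) = F g \<otimes>\<^bsub>Z2pow r\<^esub> F h"
  unfolding F_def multZ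
proof (rule restrict_ext)
  fix t assume t: "t \<in> {1..r}"
  let ?i = "\<sigma> t"
  have i: "?i \<in> ND" by (rule sig_ND[OF t])
  note ib = nd_basic[OF i]
  have "ex (lam ?i) (g ?i) \<le> m ?i" "ex (lam ?i) (h ?i) \<le> m ?i" using g h ib(1) unfolding Lset_def by auto
  hence "bitv (lam ?i) (m ?i) ((g ?i + h ?i) mod 2^lam ?i) = (bitv (lam ?i) (m ?i) (g ?i) + bitv (lam ?i) (m ?i) (h ?i)) mod 2"
    using bitv_add ib(2,3) by blast
  thus "bitv (lam ?i) (m ?i) ((g \<otimes>\<^bsub>G\<^esub> h) ?i) =
      ((\<lambda>t\<in>{1..r}. bitv (lam (\<sigma> t)) (m (\<sigma> t)) (g (\<sigma> t))) t + (\<lambda>t\<in>{1..r}. bitv (lam (\<sigma> t)) (m (\<sigma> t)) (h (\<sigma> t))) t) mod 2"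
    using t ib(1) by (simp add: multG)
qed

lemma F_inv:
  assumes g: "g \<in> L"
  shows "F (inv\<^bsub>G\<^esub> g) = F g"
proof -
  have gc: "g \<in> carrier G" using g by (rule L_carr)
  show ?thesis unfolding F_def invG[OF gc]
    by (rule restrict_ext) (use sig_ND nd_basic in \<open>auto simp: bitv_def ex_mod ex_neg\<close>)
qed

lemma F_one: "F \<one>\<^bsub>G\<^esub> = \<one>\<^bsub>Z2pow r\<^esub>"
  unfolding F_def oneZ oneG
  by (rule restrict_ext) (use sig_ND nd_basic in \<open>fastforce simp: bitv_def\<close>)

lemma F_sq: "k \<in> carrier (Z2pow r) \<Longrightarrow> k \<otimes>\<^bsub>Z2pow r\<^esub> k = \<one>\<^bsub>Z2pow r\<^esub>"
  unfolding multZ oneZ by (rule restrict_ext) (auto dest: memZ)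

lemma M_iff:
  assumes g: "g \<in> L"
  shows "g \<in> M \<longleftrightarrow> F g = \<one>\<^bsub>Z2pow r\<^esub>"
proof
  assume gM: "g \<in> M"
  show "F g = \<one>\<^bsub>Z2pow r\<^esub>" unfolding F_def oneZ
  proof (rule restrict_ext)
    fix t assume t: "t \<in> {1..r}"
    have i: "\<sigma> t \<in> ND" by (rule sig_ND[OF t])
    note ib = nd_basic[OF i]
    have "ex (lam (\<sigma> t)) (g (\<sigma> t)) \<le> m' (\<sigma> t)" using gM ib(1) unfolding Lset_def by auto
    hence "ex (lam (\<sigma> t)) (g (\<sigma> t)) < m (\<sigma> t)" using i ib(2) unfolding m'_def by simp
    thus "bitv (lam (\<sigma> t)) (m (\<sigma> t)) (g (\<sigma> t)) = 0" by (simp add: bitv_def)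
  qed
next
  assume F1: "F g = \<one>\<^bsub>Z2pow r\<^esub>"
  have "\<forall>i\<in>{1..n}. ex (lam i) (g i) \<le> m' i"
  proof
    fix i assume i: "i \<in> {1..n}"
    show "ex (lam i) (g i) \<le> m' i"
    proof (cases "i \<in> ND")
      case True
      then obtain t where t: "t \<in> {1..r}" "\<sigma> t = i" using sig_surj by blast
      have "F g t = 0" using F1 t by (simp add: oneZ)
      hence "bitv (lam i) (m i) (g i) = 0" using t by (simp add: F_def)
      hence "ex (lam i) (g i) < m i" by (simp add: bitv_def split: if_splits)
      thus ?thesis using True by (simp add: m'_def)
    next
      case False
      thus ?thesis using g i unfolding Lset_def m'_def by auto
    qed
  qed
  thus "g \<in> M" using g unfolding Lset_def by blast
qed

definition ak :: "(nat \<Rightarrow> int) \<Rightarrow> (nat \<Rightarrow> nat)" where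
  "ak k = (\<lambda>j. if j \<in> \<sigma> ` {s\<in>{1..r}. k s = 1} then m j else 0)"

lemma ak_Lam: "ak k \<in> LambdaG n lam"
  unfolding LambdaG_def ak_def using mL m0 by auto

lemma Tak:
  assumes k: "k \<in> carrier (Z2pow r)" and g: "g \<in> Tset n lam (ak k)"
  shows "g \<in> L \<and> F g = k"
proof -
  have gc: "g \<in> carrier G" and ge: "\<And>i. i \<in> {1..n} \<Longrightarrow> ex (lam i) (g i) = ak k i"
    using g unfolding Tset_eq by auto
  have gL: "g \<in> L" using gc ge unfolding Lset_def by (auto simp: ak_def)
  have "F g = k"
  proof (rule eqZ[OF F_carr k])
    fix t assume t: "t \<in> {1..r}"
    have i: "\<sigma> t \<in> ND" by (rule sig_ND[OF t])
    note ib = nd_basic[OF i]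
    have e: "ex (lam (\<sigma> t)) (g (\<sigma> t)) = ak k (\<sigma> t)" using ge ib(1) by blast
    show "F g t = k t"
    proof (cases "k t = 1")
      case True
      hence "ak k (\<sigma> t) = m (\<sigma> t)" using t by (auto simp: ak_def)
      thus ?thesis using t e True by (simp add: F_def bitv_def)
    next
      case False
      hence k0: "k t = 0" using memZ[OF k t] by blast
      have "\<sigma> t \<notin> \<sigma> ` {s\<in>{1..r}. k s = 1}"
      proof
        assume "\<sigma> t \<in> \<sigma> ` {s\<in>{1..r}. k s = 1}"
        then obtain s where "s \<in> {1..r}" "k s = 1" "\<sigma> s = \<sigma> t" by auto
        thus False using sig_inj[of s t] t False by auto
      qed
      hence "ak k (\<sigma> t) = 0" by (simp add: ak_def)
      thus ?thesis using t e k0 ib(2) by (simp add: F_def bitv_def)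
    qed
  qed
  thus ?thesis using gL by blast
qed

definition Psi :: "(nat \<Rightarrow> int) set \<Rightarrow> (nat \<Rightarrow> int) set" where
  "Psi K = {g \<in> L. F g \<in> K}"

lemma F_surj: "k \<in> carrier (Z2pow r) \<Longrightarrow> \<exists>g\<in>L. F g = k"
  using Tak wit_T[OF ak_Lam] by blast

lemma F_hom_diff:
  assumes g: "g \<in> L" and h: "h \<in> L" and e: "F g = F h"
  shows "g \<otimes>\<^bsub>G\<^esub> inv\<^bsub>G\<^esub> h \<in> M"
proof -
  interpret group G by (rule grpG)
  have hi: "inv\<^bsub>G\<^esub> h \<in> L" using subgroup.m_inv_closed[OF Lset_sub h] .
  have gh: "g \<otimes>\<^bsub>G\<^esub> inv\<^bsub>G\<^esub> h \<in> L" using subgroup.m_closed[OF Lset_sub g hi] .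
  have "F (g \<otimes>\<^bsub>G\<^esub> inv\<^bsub>G\<^esub> h) = F g \<otimes>\<^bsub>Z2pow r\<^esub> F h" unfolding F_mult[OF g hi] F_inv[OF h] ..
  also have "\<dots> = \<one>\<^bsub>Z2pow r\<^esub>" unfolding e by (rule F_sq[OF F_carr])
  finally show ?thesis using M_iff[OF gh] by simp
qed

lemma step_i:
  assumes cb: "char_below n lam m H"
  shows "Psi (F ` H) = H"
proof
  show "H \<subseteq> Psi (F ` H)" using char_H_L[OF cb] unfolding Psi_def by blast
next
  show "Psi (F ` H) \<subseteq> H"
  proof
    fix g assume "g \<in> Psi (F ` H)"
    then obtain h where g: "g \<in> L" and h: "h \<in> H" and e: "F g = F h" unfolding Psi_def by blast
    interpret group G by (rule grpG)
    have sg: "subgroup H G" using cb unfolding char_below_def characteristic_def by blast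
    have hL: "h \<in> L" using char_H_L[OF cb] h by blast
    have d: "g \<otimes>\<^bsub>G\<^esub> inv\<^bsub>G\<^esub> h \<in> H" using F_hom_diff[OF g hL e] char_M_H[OF cb] by blast
    have gc: "g \<in> carrier G" and hc: "h \<in> carrier G" using g hL by (auto simp: L_carr)
    have "g = (g \<otimes>\<^bsub>G\<^esub> inv\<^bsub>G\<^esub> h) \<otimes>\<^bsub>G\<^esub> h" using gc hc by (simp add: m_assoc)
    thus "g \<in> H" using subgroup.m_closed[OF sg d h] by simp
  qed
qed

lemma step_ii:
  assumes ps: "proj_surjective r K"
  shows "F ` (Psi K) = K"
proof
  show "F ` Psi K \<subseteq> K" unfolding Psi_def by blast
  show "K \<subseteq> F ` Psi K"
  proof
    fix k assume k: "k \<in> K"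
    have "k \<in> carrier (Z2pow r)" using ps k unfolding proj_surjective_def using subgroup.subset by blast
    then obtain g where "g \<in> L" "F g = k" using F_surj by blast
    thus "k \<in> F ` Psi K" using k unfolding Psi_def by force
  qed
qed

lemma step_iii:
  assumes cb: "char_below n lam m H"
  shows "proj_surjective r (F ` H)"
proof -
  have sg: "subgroup H G" using cb unfolding char_below_def characteristic_def by blast
  have HL: "H \<subseteq> L" by (rule char_H_L[OF cb])
  interpret Z: group "Z2pow r" by (rule grpZ)
  have sub: "subgroup (F ` H) (Z2pow r)"
  proof (rule Z.subgroupI)
    show "F ` H \<subseteq> carrier (Z2pow r)" using F_carr by blast
    show "F ` H \<noteq> {}" using subgroup.one_closed[OF sg] by blast
  next
    fix a assume "a \<in> F ` H"
    then obtain h where h: "h \<in> H" "a = F h" by blast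
    have "inv\<^bsub>Z2pow r\<^esub> a = a" unfolding h(2) invZ[OF F_carr] unfolding F_def
      by (rule restrict_ext) (simp add: bitv_def)
    thus "inv\<^bsub>Z2pow r\<^esub> a \<in> F ` H" using h by simp
  next
    fix a b assume "a \<in> F ` H" "b \<in> F ` H"
    then obtain g h where gh: "g \<in> H" "h \<in> H" "a = F g" "b = F h" by blast
    have gL: "g \<in> L" and hL: "h \<in> L" using gh(1,2) HL by auto
    have "a \<otimes>\<^bsub>Z2pow r\<^esub> b = F (g \<otimes>\<^bsub>G\<^esub> h)" unfolding gh(3,4) F_mult[OF gL hL] ..
    thus "a \<otimes>\<^bsub>Z2pow r\<^esub> b \<in> F ` H" using subgroup.m_closed[OF sg gh(1,2)] by simp
  qed
  have "\<forall>t\<in>{1..r}. (\<lambda>k. k t) ` F ` H = carrier (integer_mod_group 2)"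
  proof
    fix t assume t: "t \<in> {1..r}"
    have i: "\<sigma> t \<in> ND" by (rule sig_ND[OF t])
    note ib = nd_basic[OF i]
    let ?X = "(\<lambda>k. k t) ` F ` H"
    have s1: "?X \<subseteq> {0..<2}"
    proof
      fix x assume "x \<in> ?X"
      then obtain h where "x = F h t" by blast
      hence "x = 0 \<or> x = 1" using memZ[OF F_carr t] by simp
      thus "x \<in> {0..<2}" by auto
    qed
    have "F \<one>\<^bsub>G\<^esub> \<in> F ` H" using subgroup.one_closed[OF sg] by (rule imageI)
    hence "F \<one>\<^bsub>G\<^esub> t \<in> ?X" by (rule imageI)
    moreover have "F \<one>\<^bsub>G\<^esub> t = 0" using t by (simp add: F_one oneZ)
    ultimately have z: "0 \<in> ?X" by simp
    obtain h where h: "h \<in> H" "ex (lam (\<sigma> t)) (h (\<sigma> t)) = m (\<sigma> t)" using char_Max_in[OF cb ib(1)] by blast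
    have "F h \<in> F ` H" using h(1) by (rule imageI)
    hence "F h t \<in> ?X" by (rule imageI)
    moreover have "F h t = 1" using t h(2) by (simp add: F_def bitv_def)
    ultimately have o: "1 \<in> ?X" by simp
    have s2: "{0..<2} \<subseteq> ?X"
    proof
      fix x :: int assume "x \<in> {0..<2}"
      hence "x = 0 \<or> x = 1" by auto
      thus "x \<in> ?X" using z o by blast
    qed
    have "(\<lambda>k. k t) ` F ` H = {0..<2}" using s1 s2 by (rule subset_antisym)
    thus "(\<lambda>k. k t) ` F ` H = carrier (integer_mod_group 2)" by (simp add: carrier_integer_mod_group)
  qed
  thus ?thesis using sub unfolding proj_surjective_def by blast
qed

lemma M_Psi: "proj_surjective r K \<Longrightarrow> M \<subseteq> Psi K"
proof
  fix g assume ps: "proj_surjective r K" and g: "g \<in> M"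
  have gL: "g \<in> L" using g M_sub_L by blast
  have "F g = \<one>\<^bsub>Z2pow r\<^esub>" using M_iff[OF gL] g by blast
  moreover have "\<one>\<^bsub>Z2pow r\<^esub> \<in> K" using ps subgroup.one_closed unfolding proj_surjective_def by blast
  ultimately show "g \<in> Psi K" using gL unfolding Psi_def by simp
qed

lemma step_iv:
  assumes ps: "proj_surjective r K"
  shows "char_below n lam m (Psi K)"
proof -
  have sK: "subgroup K (Z2pow r)" using ps unfolding proj_surjective_def by blast
  interpret group G by (rule grpG)
  have PL: "Psi K \<subseteq> L" unfolding Psi_def by blast
  have sg: "subgroup (Psi K) G"
  proof (rule subgroupI)
    show "Psi K \<subseteq> carrier G" using PL by (auto simp: L_carr)
    show "Psi K \<noteq> {}" using M_Psi[OF ps] subgroup.one_closed[OF Lset_sub[of m']] by blast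
  next
    fix a assume a: "a \<in> Psi K"
    hence "a \<in> L" "F a \<in> K" unfolding Psi_def by auto
    thus "inv\<^bsub>G\<^esub> a \<in> Psi K" unfolding Psi_def using subgroup.m_inv_closed[OF Lset_sub] F_inv by simp
  next
    fix a b assume "a \<in> Psi K" "b \<in> Psi K"
    hence ab: "a \<in> L" "b \<in> L" "F a \<in> K" "F b \<in> K" unfolding Psi_def by auto
    thus "a \<otimes>\<^bsub>G\<^esub> b \<in> Psi K" unfolding Psi_def
      using subgroup.m_closed[OF Lset_sub ab(1,2)] subgroup.m_closed[OF sK ab(3,4)] F_mult[OF ab(1,2)] by simp
  qed
  have finP: "finite (Psi K)" using finG by (rule rev_finite_subset) (use sg subgroup.subset in blast)
  have ch: "characteristic (Psi K) G"
    unfolding characteristic_def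
  proof (intro conjI ballI)
    show "subgroup (Psi K) G" by (rule sg)
    fix \<phi> assume iso: "\<phi> \<in> iso G G"
    have hom: "\<phi> \<in> hom G G" using iso by (simp add: iso_def)
    have sub: "\<phi> ` Psi K \<subseteq> Psi K"
    proof
      fix y assume "y \<in> \<phi> ` Psi K"
      then obtain g where g: "g \<in> Psi K" "y = \<phi> g" by blast
      have gL: "g \<in> L" and gK: "F g \<in> K" using g unfolding Psi_def by auto
      have "F (\<phi> g) = F g" unfolding F_def
        by (rule restrict_ext) (use bit_pres[OF iso gL] sig_ND in blast)
      thus "y \<in> Psi K" using K3a[OF hom gL] gK g unfolding Psi_def by simp
    qed
    have inj: "inj_on \<phi> (Psi K)"
      using iso sg subgroup.subset by (auto simp: iso_def bij_betw_def intro: inj_on_subset)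
    have "card (\<phi> ` Psi K) = card (Psi K)" by (rule card_image[OF inj])
    thus "\<phi> ` Psi K = Psi K" using card_subset_eq[OF finP sub] by simp
  qed
  have mx: "\<forall>i\<in>{1..n}. m i = Max {a i |a. a \<in> LambdaG n lam \<and> Tset n lam a \<subseteq> Psi K}"
  proof
    fix i assume i: "i \<in> {1..n}"
    show "m i = Max {a i |a. a \<in> LambdaG n lam \<and> Tset n lam a \<subseteq> Psi K}"
    proof (rule sym, rule Max_eqI[OF S_fin[OF i]])
      fix y assume "y \<in> {a i |a. a \<in> LambdaG n lam \<and> Tset n lam a \<subseteq> Psi K}"
      then obtain a where a: "y = a i" "a \<in> LambdaG n lam" "Tset n lam a \<subseteq> Psi K" by blast
      have "wit a \<in> L" using wit_T[OF a(2)] a(3) PL by blast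
      hence "ex (lam i) (wit a i) \<le> m i" using i unfolding Lset_def by blast
      thus "y \<le> m i" using wit_T[OF a(2)] i a(1) unfolding Tset_eq by auto
    next
      show "m i \<in> {a i |a. a \<in> LambdaG n lam \<and> Tset n lam a \<subseteq> Psi K}"
      proof (cases "i \<in> ND")
        case False
        define a where "a = (\<lambda>j. if j = i then m i else 0)"
        have aL: "a \<in> LambdaG n lam" unfolding a_def LambdaG_def using mL i by auto
        have "Tset n lam a \<subseteq> M"
        proof
          fix g assume "g \<in> Tset n lam a"
          hence "g \<in> carrier G" "\<And>j. j \<in> {1..n} \<Longrightarrow> ex (lam j) (g j) = a j" unfolding Tset_eq by auto
          thus "g \<in> M" unfolding Lset_def a_def m'_def using False by auto
        qed
        hence "Tset n lam a \<subseteq> Psi K" using M_Psi[OF ps] by blast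
        thus ?thesis using aL by (intro CollectI exI[of _ a]) (simp add: a_def)
      next
        case True
        then obtain t where t: "t \<in> {1..r}" "\<sigma> t = i" using sig_surj by blast
        have "(\<lambda>k. k t) ` K = carrier (integer_mod_group 2)" using ps t unfolding proj_surjective_def by blast
        hence "1 \<in> (\<lambda>k. k t) ` K" by (simp add: carrier_integer_mod_group)
        then obtain k where k: "k \<in> K" "k t = 1" by auto
        have kc: "k \<in> carrier (Z2pow r)" using k(1) sK subgroup.subset by blast
        have "Tset n lam (ak k) \<subseteq> Psi K" using Tak[OF kc] k(1) unfolding Psi_def by blast
        moreover have "ak k i = m i" using t k unfolding ak_def by force
        ultimately show ?thesis by (intro CollectI exI[of _ "ak k"]) (simp add: ak_Lam)
      qed
    qed
  qed
  show ?thesis unfolding char_below_def using ch mx by blast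
qed

lemma main_bij: "bij_betw (\<lambda>H. F ` H) {H. char_below n lam m H} {K. proj_surjective r K}"
  by (rule bij_betw_byWitness[where f' = Psi]) (auto simp: step_i step_ii step_iii step_iv)

end



theorem mainTheorem4:
  fixes n :: nat and lam m :: "nat \<Rightarrow> nat"
  assumes "\<And>i. i \<in> {2..n} \<Longrightarrow> lam (i - 1) \<le> lam i"
    and "canonical n lam m"
  shows "\<exists>f. bij_betw f {H. char_below n lam m H}
                        {K. proj_surjective (nondeg_count n lam m) K}"
proof -
  have s: "S n lam m" using assms by (rule S.intro)
  have fin: "finite (S.ND n lam m)" using S.ND_sub[OF s] by (rule finite_subset) simp
  obtain \<sigma> where sig: "bij_betw \<sigma> {1..card (S.ND n lam m)} (S.ND n lam m)"
    using ex_bij_betw_nat_finite_1[OF fin] by blast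
  have t: "T n lam m \<sigma> (card (S.ND n lam m))" by (intro T.intro s T_axioms.intro sig)
  have "nondeg_count n lam m = card (S.ND n lam m)"
    by (simp add: nondeg_count_def S.ND_def[OF s])
  thus ?thesis using T.main_bij[OF t] by auto
qed


end
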